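(* Let $D=\{x\in\mathbb{R}^m:\|x\|_\infty\le\rho\}$, $r\ge1$, let $B_0,\ldots,B_N$ be real $d\times d$ matrices with $B_0$ invertible, and let $\Lambda$ be a real $m\times m$ matrix. Suppose there is a real number $\mu$ with (1) $\|\Lambda\|^r\le\mu<1$, and (2) $\sum_{i=1}^N\mu^i\|B_0^{-1}B_i\|<1$. Then the linear operator $\mathcal{L}:H_r\to H_r$, $\mathcal{L}\varphi=\sum_{j=0}^NB_j(\varphi\circ\Lambda^j)$, is well defined and invertible with bounded inverse.
   Context: $\|\cdot\|_\infty$ is the sup norm on $\mathbb{R}^m$ and $\mathbb{R}^d$; matrix norms are the corresponding operator norms. For a $k$-linear map $B$, $\|B\|=\sup\{\|B(\xi_1,\ldots,\xi_k)\|_\infty:\|\xi_i\|_\infty=1\}$. $H_r=\{P\in C^r(D,\mathbb{R}^d): D^iP(0)=0 \text{ for } 0\le i\le r-1\}$, a Banach space with the norm $\|P\|'_r=\sup_{x\in D}\|D^rP(x)\|$. ($\mathcal{L}$ is the derivative at $0$ of the parameterization operator $\Phi(P)(z)=Z(P(z),P(\Lambda z),\ldots,P(\Lambda^Nz))$ when $B_j=\partial_jZ(0)$.) *)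

theory Defs
  imports "HOL-Analysis.Analysis"
begin

text \<open>Sup norm on real vectors (the dimension is the finite index type).\<close>
definition supn :: "real^'n \<Rightarrow> real" where
  "supn x = Max (range (\<lambda>i. \<bar>x $ i\<bar>))"

text \<open>Operator norm of a matrix w.r.t. the sup norm.\<close>
definition opnorm_inf :: "real^'n^'k \<Rightarrow> real" where
  "opnorm_inf A = (SUP x \<in> {x. supn x = 1}. supn (A *v x))"

text \<open>Norm of a k-linear map T, represented as a function of a direction
  sequence xi (only xi 0, ..., xi (k-1) matter).\<close>
definition mlnorm :: "nat \<Rightarrow> ((nat \<Rightarrow> real^'m) \<Rightarrow> real^'d) \<Rightarrow> real" where
  "mlnorm k T = (SUP xi \<in> {xi. \<forall>i<k. supn (xi i) = 1}. supn (T xi))"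

text \<open>The closed sup-norm ball D of radius rho.\<close>
definition Dset :: "real \<Rightarrow> (real^'m) set" where
  "Dset \<rho> = {x. supn x \<le> \<rho>}"

text \<open>Iterated Frechet derivative relative to the set S:
  dd S k f xi x = D^k f(x)(xi 0, ..., xi (k-1)).\<close>
fun dd :: "(real^'m) set \<Rightarrow> nat \<Rightarrow> (real^'m \<Rightarrow> real^'d) \<Rightarrow> (nat \<Rightarrow> real^'m) \<Rightarrow> real^'m \<Rightarrow> real^'d" where
  "dd S 0 f xi x = f x"
| "dd S (Suc k) f xi x = frechet_derivative (\<lambda>y. dd S k f xi y) (at x within S) (xi k)"

text \<open>f is C^r on S: the derivatives D^k f (k < r) are differentiable on S and
  D^r f is continuous on S in the multilinear operator norm.\<close>
definition Cr_on :: "(real^'m) set \<Rightarrow> nat \<Rightarrow> (real^'m \<Rightarrow> real^'d) \<Rightarrow> bool" where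
  "Cr_on S r f \<longleftrightarrow>
     (\<forall>k<r. \<forall>xi. \<forall>x\<in>S. (\<lambda>y. dd S k f xi y) differentiable (at x within S)) \<and>
     (\<forall>x\<in>S. ((\<lambda>y. mlnorm r (\<lambda>xi. dd S r f xi y - dd S r f xi x)) \<longlongrightarrow> 0) (at x within S))"

text \<open>The space H_r. Elements are functions on D; we represent them as total
  functions vanishing outside D (so that equality in H_r is equality of functions).\<close>
definition Hr :: "real \<Rightarrow> nat \<Rightarrow> (real^'m \<Rightarrow> real^'d) set" where
  "Hr \<rho> r = {P. Cr_on (Dset \<rho>) r P \<and> (\<forall>x. x \<notin> Dset \<rho> \<longrightarrow> P x = 0) \<and>
                 (\<forall>i<r. \<forall>xi. dd (Dset \<rho>) i P xi 0 = 0)}"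

text \<open>The norm of H_r: sup over D of the norm of D^r P(x).\<close>
definition Hnorm :: "real \<Rightarrow> nat \<Rightarrow> (real^'m \<Rightarrow> real^'d) \<Rightarrow> real" where
  "Hnorm \<rho> r P = (SUP x \<in> Dset \<rho>. mlnorm r (\<lambda>xi. dd (Dset \<rho>) r P xi x))"

text \<open>The operator L phi = sum_{j=0}^N B_j (phi o Lambda^j), on D (zero outside D).\<close>
definition Lop :: "real \<Rightarrow> nat \<Rightarrow> (nat \<Rightarrow> real^'d^'d) \<Rightarrow> real^'m^'m
                   \<Rightarrow> (real^'m \<Rightarrow> real^'d) \<Rightarrow> real^'m \<Rightarrow> real^'d" where
  "Lop \<rho> N B \<Lambda> \<phi> x =
     (if x \<in> Dset \<rho> then (\<Sum>j=0..N. B j *v \<phi> (((*v) \<Lambda> ^^ j) x)) else 0)"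

end

theory Submission
  imports Defs
begin


lemma supn_ge: "\<bar>x $ i\<bar> \<le> supn x"
  unfolding supn_def by (rule Max_ge) auto

lemma supn_le_iff: "supn x \<le> b \<longleftrightarrow> (\<forall>i. \<bar>x $ i\<bar> \<le> b)"
  unfolding supn_def by (subst Max_le_iff) auto

lemma supn_nonneg: "0 \<le> supn x"
  using supn_ge[of x undefined] by linarith

lemma supn_le_norm: "supn x \<le> norm x"
  unfolding supn_le_iff using component_le_norm_cart by blast

lemma norm_le_supn: "norm (x::real^'n) \<le> real CARD('n) * supn x"
proof -
  have "norm x \<le> (\<Sum>i\<in>UNIV. \<bar>x $ i\<bar>)" by (rule norm_le_l1_cart)
  also have "\<dots> \<le> (\<Sum>i\<in>(UNIV::'n set). supn x)" by (rule sum_mono) (rule supn_ge)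
  finally show ?thesis by simp
qed

lemma supn_add: "supn (x + y) \<le> supn x + supn y"
  unfolding supn_le_iff using supn_ge[of x] supn_ge[of y] abs_triangle_ineq
  by (metis order_trans add_mono vector_add_component)

lemma supn_diff: "supn (x - y) \<le> supn x + supn y"
  unfolding supn_le_iff using supn_ge[of x] supn_ge[of y] abs_triangle_ineq4
  by (metis order_trans add_mono vector_minus_component)

lemma supn_minus_comm: "supn (x - y) = supn (y - x)"
  unfolding supn_def by (simp add: abs_minus_commute)

lemma supn_scale: "supn (c *\<^sub>R x) = \<bar>c\<bar> * supn x"
proof (rule antisym)
  show "supn (c *\<^sub>R x) \<le> \<bar>c\<bar> * supn x"
    unfolding supn_le_iff by (simp add: abs_mult mult_left_mono supn_ge)
  have "supn x \<in> range (\<lambda>i. \<bar>x $ i\<bar>)" unfolding supn_def by (rule Max_in) auto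
  then obtain i where i: "supn x = \<bar>x $ i\<bar>" by auto
  show "\<bar>c\<bar> * supn x \<le> supn (c *\<^sub>R x)"
    using supn_ge[of "c *\<^sub>R x" i] i by (simp add: abs_mult)
qed

lemma supn_zero[simp]: "supn 0 = 0"
proof -
  have "supn 0 \<le> (0::real)" by (simp add: supn_le_iff)
  then show ?thesis using supn_nonneg by (meson antisym)
qed

lemma supn_eq_0: "supn x = 0 \<longleftrightarrow> x = 0"
proof
  assume "supn x = 0" then show "x = 0"
    using supn_ge[of x] by (simp add: vec_eq_iff)
qed simp

lemma supn_sum: "finite A \<Longrightarrow> supn (\<Sum>j\<in>A. f j) \<le> (\<Sum>j\<in>A. supn (f j))"
  by (induction A rule: finite_induct) (auto intro: order_trans[OF supn_add])

lemma supn_neg: "supn (- x) = supn x"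
  unfolding supn_def by simp

text \<open>operator norm\<close>

lemma supn_mat_crude: "supn (A *v x) \<le> (\<Sum>i\<in>UNIV. \<Sum>j\<in>UNIV. \<bar>A $ i $ j\<bar>) * supn x"
  unfolding supn_le_iff
proof
  fix i
  have "\<bar>(A *v x) $ i\<bar> = \<bar>\<Sum>j\<in>UNIV. A $ i $ j * x $ j\<bar>" by (simp add: matrix_vector_mult_def)
  also have "\<dots> \<le> (\<Sum>j\<in>UNIV. \<bar>A $ i $ j\<bar> * supn x)"
    by (rule order_trans[OF sum_abs]) (auto intro!: sum_mono simp: abs_mult mult_left_mono supn_ge)
  also have "\<dots> = (\<Sum>j\<in>UNIV. \<bar>A $ i $ j\<bar>) * supn x" by (simp add: sum_distrib_right)
  also have "\<dots> \<le> (\<Sum>i\<in>UNIV. \<Sum>j\<in>UNIV. \<bar>A $ i $ j\<bar>) * supn x"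
    by (rule mult_right_mono[OF member_le_sum]) (auto simp: supn_nonneg)
  finally show "\<bar>(A *v x) $ i\<bar> \<le> (\<Sum>i\<in>UNIV. \<Sum>j\<in>UNIV. \<bar>A $ i $ j\<bar>) * supn x" .
qed

lemma exists_unit: "\<exists>x::real^'n. supn x = 1"
proof -
  have "supn (1::real^'n) = 1" unfolding supn_def by simp
  then show ?thesis by blast
qed

lemma opnorm_bdd: fixes A :: "real^'n^'k" shows "bdd_above ((\<lambda>x. supn (A *v x)) ` {x. supn x = 1})"
proof (rule bdd_aboveI2)
  fix x :: "real^'n" assume "x \<in> {x. supn x = 1}"
  then show "supn (A *v x) \<le> (\<Sum>i\<in>UNIV. \<Sum>j\<in>UNIV. \<bar>A $ i $ j\<bar>)"
    using supn_mat_crude[of A x] by simp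
qed

lemma opnorm_bound: "supn (A *v x) \<le> opnorm_inf A * supn x"
proof (cases "x = 0")
  case True then show ?thesis by (simp add: supn_nonneg)
next
  case False
  then have s: "supn x > 0" using supn_eq_0 supn_nonneg by (metis less_eq_real_def)
  define y where "y = (1 / supn x) *\<^sub>R x"
  have y1: "supn y = 1" using s by (simp add: y_def supn_scale)
  have "supn (A *v y) \<le> opnorm_inf A"
    unfolding opnorm_inf_def using y1 by (intro cSUP_upper opnorm_bdd) simp
  moreover have "A *v x = supn x *\<^sub>R (A *v y)" using s
    by (simp add: y_def matrix_vector_mult_scaleR)
  ultimately show ?thesis using s
    by (simp add: supn_scale mult.commute)
qed

lemma opnorm_nonneg: "0 \<le> opnorm_inf (A::real^'n^'k)"
proof -
  obtain x :: "real^'n" where "supn x = 1" using exists_unit by blast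
  then show ?thesis using opnorm_bound[of A x] supn_nonneg[of "A *v x"] by simp
qed

text \<open>Dset\<close>

lemma Dset_cbox: "Dset \<rho> = cbox (- (\<chi> i. \<rho>)) ((\<chi> i. \<rho>) :: real^'m)"
  unfolding Dset_def cbox_def supn_le_iff
  by (auto simp: Basis_vec_def cart_eq_inner_axis[symmetric] abs_le_iff) (metis minus_le_iff)+



lemma Dset_Basis_lt:
  assumes "\<rho> > 0" "i \<in> (Basis :: (real^'m) set)"
  shows "(- (\<chi> i. \<rho>)) \<bullet> i < (\<chi> i. \<rho>) \<bullet> i"
  using assms by (auto simp: Basis_vec_def inner_axis)

lemma fd_unique:
  fixes f :: "real^'m \<Rightarrow> 'b::real_normed_vector"
  assumes "\<rho> > 0" "x \<in> Dset \<rho>" "(f has_derivative f') (at x within Dset \<rho>)"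
  shows "frechet_derivative f (at x within Dset \<rho>) = f'"
  unfolding Dset_cbox
proof (rule frechet_derivative_within_cbox)
  fix i :: "real^'m" assume i: "i \<in> Basis"
  show "(- (\<chi> i. \<rho>)) \<bullet> i < (\<chi> i. \<rho>) \<bullet> i" using Dset_Basis_lt[OF assms(1) i] .
qed (use assms[unfolded Dset_cbox] in auto)

lemma hd_cong:
  assumes "x \<in> S" "\<And>y. y \<in> S \<Longrightarrow> f y = g y"
  shows "(f has_derivative f') (at x within S) \<longleftrightarrow> (g has_derivative f') (at x within S)"
  using assms has_derivative_transform_within[of f f' x S 1 g]
    has_derivative_transform_within[of g f' x S 1 f] by auto

lemma fd_cong:
  assumes "x \<in> S" "\<And>y. y \<in> S \<Longrightarrow> f y = g y"
  shows "frechet_derivative f (at x within S) = frechet_derivative g (at x within S)"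
  unfolding frechet_derivative_def using hd_cong[OF assms] by simp

lemma diff_cong:
  assumes "f differentiable (at x within S)" "x \<in> S" "\<And>y. y \<in> S \<Longrightarrow> f y = g y"
  shows "g differentiable (at x within S)"
proof -
  obtain D where "(f has_derivative D) (at x within S)" using assms(1) unfolding differentiable_def by blast
  then have "(g has_derivative D) (at x within S)" using hd_cong[OF assms(2,3)] by simp
  then show ?thesis unfolding differentiable_def by blast
qed

lemma dd_cong:
  assumes "\<And>y. y \<in> S \<Longrightarrow> f y = g y" "x \<in> S"
  shows "dd S k f xi x = dd S k g xi x"
  using assms(2)
proof (induction k arbitrary: x)
  case 0 then show ?case using assms(1) by simp
next
  case (Suc k)
  then show ?case by (simp add: fd_cong[OF Suc.prems Suc.IH])
qed

lemma dd_slot: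
  "(\<And>i. i < k \<Longrightarrow> xi i = xi' i) \<Longrightarrow> dd S k f xi = dd S k f xi'"
proof (induction k)
  case 0 then show ?case by (simp add: fun_eq_iff)
next
  case (Suc k)
  then have e: "dd S k f xi = dd S k f xi'" by simp
  show ?case apply (rule ext) apply (simp only: dd.simps e) using Suc.prems by simp
qed

definition smooth :: "(real^'m) set \<Rightarrow> nat \<Rightarrow> (real^'m \<Rightarrow> real^'d) \<Rightarrow> bool" where
  "smooth S k f \<longleftrightarrow> (\<forall>j<k. \<forall>xi. \<forall>x\<in>S. (\<lambda>y. dd S j f xi y) differentiable (at x within S))"

lemma smoothD: "smooth S k f \<Longrightarrow> j < k \<Longrightarrow> x \<in> S \<Longrightarrow> (\<lambda>y. dd S j f xi y) differentiable (at x within S)"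
  unfolding smooth_def by blast

lemma fd_add:
  fixes f g :: "real^'m \<Rightarrow> 'b::real_normed_vector"
  assumes "\<rho> > 0" "x \<in> Dset \<rho>" "f differentiable (at x within Dset \<rho>)" "g differentiable (at x within Dset \<rho>)"
  shows "frechet_derivative (\<lambda>y. f y + g y) (at x within Dset \<rho>)
     = (\<lambda>h. frechet_derivative f (at x within Dset \<rho>) h + frechet_derivative g (at x within Dset \<rho>) h)"
  by (rule fd_unique[OF assms(1,2)])
    (intro has_derivative_add frechet_derivative_works[THEN iffD1] assms(3,4))

lemma fd_lin:
  fixes f :: "real^'m \<Rightarrow> 'b::real_normed_vector"
  assumes "\<rho> > 0" "x \<in> Dset \<rho>" "f differentiable (at x within Dset \<rho>)" "bounded_linear L"
  shows "frechet_derivative (\<lambda>y. L (f y)) (at x within Dset \<rho>)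
     = (\<lambda>h. L (frechet_derivative f (at x within Dset \<rho>) h))"
  using fd_unique[OF assms(1,2) bounded_linear.has_derivative[OF assms(4) frechet_derivative_works[THEN iffD1, OF assms(3)]]]
  by (simp add: o_def)

lemma diff_lin:
  assumes "f differentiable (at x within S)" "bounded_linear L"
  shows "(\<lambda>y. L (f y)) differentiable (at x within S)"
  using assms bounded_linear.has_derivative unfolding differentiable_def by blast

lemma Dset_zero: "\<rho> \<ge> 0 \<Longrightarrow> 0 \<in> Dset \<rho>"
  unfolding Dset_def by simp

lemma fd_comp:
  fixes f :: "real^'m \<Rightarrow> 'b::real_normed_vector"
  assumes "\<rho> > 0" "x \<in> Dset \<rho>" "linear T" "T ` Dset \<rho> \<subseteq> Dset \<rho>"
    "f differentiable (at (T x) within Dset \<rho>)"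
  shows "frechet_derivative (\<lambda>y. f (T y)) (at x within Dset \<rho>)
     = (\<lambda>h. frechet_derivative f (at (T x) within Dset \<rho>) (T h))"
    and "(\<lambda>y. f (T y)) differentiable (at x within Dset \<rho>)"
proof -
  have T: "(T has_derivative T) (at x within Dset \<rho>)"
    using assms(3) by (simp add: bounded_linear_imp_has_derivative linear_conv_bounded_linear)
  have F: "(f has_derivative frechet_derivative f (at (T x) within Dset \<rho>)) (at (T x) within T ` Dset \<rho>)"
    using frechet_derivative_works[THEN iffD1, OF assms(5)] assms(4) by (rule has_derivative_subset)
  have "((f \<circ> T) has_derivative (frechet_derivative f (at (T x) within Dset \<rho>) \<circ> T)) (at x within Dset \<rho>)"
    by (rule diff_chain_within[OF T F])
  then show "frechet_derivative (\<lambda>y. f (T y)) (at x within Dset \<rho>)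
     = (\<lambda>h. frechet_derivative f (at (T x) within Dset \<rho>) (T h))"
    and "(\<lambda>y. f (T y)) differentiable (at x within Dset \<rho>)"
    using fd_unique[OF assms(1,2)] unfolding differentiable_def by (auto simp: o_def)
qed



definition ml :: "nat \<Rightarrow> ((nat \<Rightarrow> real^'m) \<Rightarrow> real^'d) \<Rightarrow> bool" where
  "ml k M \<longleftrightarrow> (\<forall>xi xi'. (\<forall>i<k. xi i = xi' i) \<longrightarrow> M xi = M xi') \<and> (\<forall>i<k. \<forall>xi. linear (\<lambda>v. M (xi(i:=v))))"

context fixes \<rho> :: real assumes rho: "\<rho> > 0"
begin

lemma dd_zero:
  "x \<in> Dset \<rho> \<Longrightarrow> dd (Dset \<rho>) k (\<lambda>y. 0 :: real^'d) xi x = 0"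
proof (induction k arbitrary: x)
  case 0 then show ?case by simp
next
  case (Suc k)
  have "frechet_derivative (\<lambda>y. dd (Dset \<rho>) k (\<lambda>y. 0 :: real^'d) xi y) (at x within Dset \<rho>)
      = frechet_derivative (\<lambda>y. 0) (at x within Dset \<rho>)"
    using Suc by (intro fd_cong) auto
  also have "\<dots> = (\<lambda>h. 0)" by (rule fd_unique[OF rho Suc.prems]) simp
  finally show ?case by simp
qed

lemma smooth_zero: "smooth (Dset \<rho>) k (\<lambda>y. 0 :: real^'d)"
  unfolding smooth_def
proof (intro allI impI ballI)
  fix j xi and x :: "real^'m" assume "x \<in> Dset \<rho>"
  then show "(\<lambda>y. dd (Dset \<rho>) j (\<lambda>y. 0 :: real^'d) xi y) differentiable (at x within Dset \<rho>)"
    by (rule diff_cong[OF differentiable_const[of 0]]) (simp add: dd_zero)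
qed

lemma dd_add:
  assumes f: "smooth (Dset \<rho>) k f" and g: "smooth (Dset \<rho>) k g"
  shows "j \<le> k \<Longrightarrow> x \<in> Dset \<rho> \<Longrightarrow> dd (Dset \<rho>) j (\<lambda>y. f y + g y) xi x = dd (Dset \<rho>) j f xi x + dd (Dset \<rho>) j g xi x"
proof (induction j arbitrary: x)
  case 0 then show ?case by simp
next
  case (Suc j)
  have "frechet_derivative (\<lambda>y. dd (Dset \<rho>) j (\<lambda>y. f y + g y) xi y) (at x within Dset \<rho>)
      = frechet_derivative (\<lambda>y. dd (Dset \<rho>) j f xi y + dd (Dset \<rho>) j g xi y) (at x within Dset \<rho>)"
    using Suc by (intro fd_cong) auto
  also have "\<dots> = (\<lambda>h. frechet_derivative (\<lambda>y. dd (Dset \<rho>) j f xi y) (at x within Dset \<rho>) h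
      + frechet_derivative (\<lambda>y. dd (Dset \<rho>) j g xi y) (at x within Dset \<rho>) h)"
    using Suc.prems by (intro fd_add[OF rho] smoothD[OF f] smoothD[OF g]) auto
  finally show ?case by simp
qed

lemma smooth_add:
  fixes f g :: "real^'m \<Rightarrow> real^'d"
  assumes f: "smooth (Dset \<rho>) k f" and g: "smooth (Dset \<rho>) k g"
  shows "smooth (Dset \<rho>) k (\<lambda>y. f y + g y)"
  unfolding smooth_def
proof (intro allI impI ballI)
  fix j xi and x :: "real^'m" assume j: "j < k" and x: "x \<in> Dset \<rho>"
  have "(\<lambda>y. dd (Dset \<rho>) j f xi y + dd (Dset \<rho>) j g xi y) differentiable (at x within Dset \<rho>)"
    by (intro differentiable_add smoothD[OF f] smoothD[OF g] j x)
  then show "(\<lambda>y. dd (Dset \<rho>) j (\<lambda>y. f y + g y) xi y) differentiable (at x within Dset \<rho>)"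
    by (rule diff_cong[OF _ x]) (simp add: dd_add[OF f g] j less_imp_le)
qed

lemma dd_lin:
  assumes f: "smooth (Dset \<rho>) k f" and L: "bounded_linear L"
  shows "j \<le> k \<Longrightarrow> x \<in> Dset \<rho> \<Longrightarrow> dd (Dset \<rho>) j (\<lambda>y. L (f y)) xi x = L (dd (Dset \<rho>) j f xi x)"
proof (induction j arbitrary: x)
  case 0 then show ?case by simp
next
  case (Suc j)
  have "frechet_derivative (\<lambda>y. dd (Dset \<rho>) j (\<lambda>y. L (f y)) xi y) (at x within Dset \<rho>)
      = frechet_derivative (\<lambda>y. L (dd (Dset \<rho>) j f xi y)) (at x within Dset \<rho>)"
    using Suc by (intro fd_cong) auto
  also have "\<dots> = (\<lambda>h. L (frechet_derivative (\<lambda>y. dd (Dset \<rho>) j f xi y) (at x within Dset \<rho>) h))"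
    using Suc.prems by (intro fd_lin[OF rho _ _ L] smoothD[OF f]) auto
  finally show ?case by simp
qed

lemma smooth_lin:
  fixes f :: "real^'m \<Rightarrow> real^'d"
  assumes f: "smooth (Dset \<rho>) k f" and L: "bounded_linear L"
  shows "smooth (Dset \<rho>) k (\<lambda>y. L (f y))"
  unfolding smooth_def
proof (intro allI impI ballI)
  fix j xi and x :: "real^'m" assume j: "j < k" and x: "x \<in> Dset \<rho>"
  have "(\<lambda>y. L (dd (Dset \<rho>) j f xi y)) differentiable (at x within Dset \<rho>)"
    by (intro diff_lin[OF _ L] smoothD[OF f] j x)
  then show "(\<lambda>y. dd (Dset \<rho>) j (\<lambda>y. L (f y)) xi y) differentiable (at x within Dset \<rho>)"
    by (rule diff_cong[OF _ x]) (simp add: dd_lin[OF f L] j less_imp_le)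
qed

lemma dd_comp:
  assumes f: "smooth (Dset \<rho>) k f" and T: "linear T" "T ` Dset \<rho> \<subseteq> Dset \<rho>"
  shows "j \<le> k \<Longrightarrow> x \<in> Dset \<rho> \<Longrightarrow> dd (Dset \<rho>) j (\<lambda>y. f (T y)) xi x = dd (Dset \<rho>) j f (\<lambda>i. T (xi i)) (T x)"
proof (induction j arbitrary: x)
  case 0 then show ?case by simp
next
  case (Suc j)
  have Tx: "T x \<in> Dset \<rho>" using T(2) Suc.prems by auto
  have "frechet_derivative (\<lambda>y. dd (Dset \<rho>) j (\<lambda>y. f (T y)) xi y) (at x within Dset \<rho>)
      = frechet_derivative (\<lambda>y. dd (Dset \<rho>) j f (\<lambda>i. T (xi i)) (T y)) (at x within Dset \<rho>)"
    using Suc by (intro fd_cong) auto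
  also have "\<dots> = (\<lambda>h. frechet_derivative (\<lambda>y. dd (Dset \<rho>) j f (\<lambda>i. T (xi i)) y) (at (T x) within Dset \<rho>) (T h))"
    using Suc.prems Tx by (intro fd_comp(1)[OF rho _ T] smoothD[OF f]) auto
  finally show ?case by simp
qed

lemma smooth_comp:
  fixes f :: "real^'m \<Rightarrow> real^'d" and T :: "real^'m \<Rightarrow> real^'m"
  assumes f: "smooth (Dset \<rho>) k f" and T: "linear T" "T ` Dset \<rho> \<subseteq> Dset \<rho>"
  shows "smooth (Dset \<rho>) k (\<lambda>y. f (T y))"
  unfolding smooth_def
proof (intro allI impI ballI)
  fix j xi and x :: "real^'m" assume j: "j < k" and x: "x \<in> Dset \<rho>"
  have Tx: "T x \<in> Dset \<rho>" using T(2) x by auto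
  have "(\<lambda>y. dd (Dset \<rho>) j f (\<lambda>i. T (xi i)) (T y)) differentiable (at x within Dset \<rho>)"
    by (intro fd_comp(2)[OF rho x T] smoothD[OF f] j Tx)
  then show "(\<lambda>y. dd (Dset \<rho>) j (\<lambda>y. f (T y)) xi y) differentiable (at x within Dset \<rho>)"
    by (rule diff_cong[OF _ x]) (simp add: dd_comp[OF f T] j less_imp_le)
qed

lemma dd_sum:
  assumes "finite J" "\<And>j. j \<in> J \<Longrightarrow> smooth (Dset \<rho>) k (F j)"
  shows "smooth (Dset \<rho>) k (\<lambda>y. \<Sum>j\<in>J. F j y) \<and>
    (\<forall>i\<le>k. \<forall>x\<in>Dset \<rho>. \<forall>xi. dd (Dset \<rho>) i (\<lambda>y. \<Sum>j\<in>J. F j y) xi x = (\<Sum>j\<in>J. dd (Dset \<rho>) i (F j) xi x))"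
  using assms
proof (induction J rule: finite_induct)
  case empty then show ?case by (simp add: smooth_zero dd_zero)
next
  case (insert a J)
  then have s: "smooth (Dset \<rho>) k (\<lambda>y. \<Sum>j\<in>J. F j y)"
    and d: "\<forall>i\<le>k. \<forall>x\<in>Dset \<rho>. \<forall>xi. dd (Dset \<rho>) i (\<lambda>y. \<Sum>j\<in>J. F j y) xi x = (\<Sum>j\<in>J. dd (Dset \<rho>) i (F j) xi x)"
    and a: "smooth (Dset \<rho>) k (F a)" by auto
  show ?case using insert.hyps
    by (simp add: smooth_add[OF a s] dd_add[OF a s] d)
qed

lemma dd_lin_slot:
  assumes f: "smooth (Dset \<rho>) k f"
  shows "j \<le> k \<Longrightarrow> x \<in> Dset \<rho> \<Longrightarrow> i < j \<Longrightarrow> linear (\<lambda>v. dd (Dset \<rho>) j f (xi(i:=v)) x)"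
proof (induction j arbitrary: x xi i)
  case 0 then show ?case by simp
next
  case (Suc j)
  have jk: "j < k" using Suc.prems by simp
  show ?case
  proof (cases "i = j")
    case True
    have e: "\<And>v. dd (Dset \<rho>) j f (xi(j:=v)) = dd (Dset \<rho>) j f xi" by (rule dd_slot) simp
    have "bounded_linear (frechet_derivative (\<lambda>y. dd (Dset \<rho>) j f xi y) (at x within Dset \<rho>))"
      using frechet_derivative_works[THEN iffD1, OF smoothD[OF f jk Suc.prems(2)]]
      by (rule has_derivative_bounded_linear)
    moreover have "(\<lambda>v. dd (Dset \<rho>) (Suc j) f (xi(j:=v)) x) = frechet_derivative (\<lambda>y. dd (Dset \<rho>) j f xi y) (at x within Dset \<rho>)"
      by (rule ext) (simp only: dd.simps e fun_upd_same)
    ultimately show ?thesis using True by (metis bounded_linear.linear)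
  next
    case False
    then have ij: "i < j" using Suc.prems by simp
    have lin: "\<And>y xi. y \<in> Dset \<rho> \<Longrightarrow> linear (\<lambda>v. dd (Dset \<rho>) j f (xi(i:=v)) y)"
      by (rule Suc.IH) (use jk ij in auto)
    define FD where "FD v = frechet_derivative (\<lambda>y. dd (Dset \<rho>) j f (xi(i:=v)) y) (at x within Dset \<rho>)" for v
    have add: "FD (a + b) = (\<lambda>h. FD a h + FD b h)" for a b
    proof -
      have "FD (a + b) = frechet_derivative (\<lambda>y. dd (Dset \<rho>) j f (xi(i:=a)) y + dd (Dset \<rho>) j f (xi(i:=b)) y) (at x within Dset \<rho>)"
        unfolding FD_def using Suc.prems(2)
        by (intro fd_cong) (auto simp: linear_add[OF lin[of _ xi]])
      also have "\<dots> = (\<lambda>h. FD a h + FD b h)" unfolding FD_def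
        by (intro fd_add[OF rho Suc.prems(2)] smoothD[OF f jk Suc.prems(2)])
      finally show ?thesis .
    qed
    have scale: "FD (c *\<^sub>R a) = (\<lambda>h. c *\<^sub>R FD a h)" for c a
    proof -
      have "FD (c *\<^sub>R a) = frechet_derivative (\<lambda>y. c *\<^sub>R dd (Dset \<rho>) j f (xi(i:=a)) y) (at x within Dset \<rho>)"
        unfolding FD_def using Suc.prems(2)
        by (intro fd_cong) (auto simp: linear_scale[OF lin[of _ xi]])
      also have "\<dots> = (\<lambda>h. c *\<^sub>R FD a h)" unfolding FD_def
        by (intro fd_lin[OF rho Suc.prems(2)] smoothD[OF f jk Suc.prems(2)] bounded_linear_scaleR_right)
      finally show ?thesis .
    qed
    have "(\<lambda>v. dd (Dset \<rho>) (Suc j) f (xi(i:=v)) x) = (\<lambda>v. FD v (xi j))"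
      using ij by (simp add: FD_def)
    moreover have "linear (\<lambda>v. FD v (xi j))"
      by (rule linearI) (simp_all add: add scale)
    ultimately show ?thesis by (simp only:)
  qed
qed

lemma dd_ml:
  assumes f: "smooth (Dset \<rho>) k f" and "j \<le> k" "x \<in> Dset \<rho>"
  shows "ml j (\<lambda>xi. dd (Dset \<rho>) j f xi x)"
  unfolding ml_def
proof (intro conjI allI impI)
  fix xi xi' :: "nat \<Rightarrow> real^'a" assume "\<forall>i<j. xi i = xi' i"
  then have "dd (Dset \<rho>) j f xi = dd (Dset \<rho>) j f xi'" by (intro dd_slot) auto
  then show "dd (Dset \<rho>) j f xi x = dd (Dset \<rho>) j f xi' x" by simp
next
  fix i xi assume "i < j"
  then show "linear (\<lambda>v. dd (Dset \<rho>) j f (xi(i := v)) x)" using dd_lin_slot[OF f] assms by simp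
qed

end



lemma basis_exp_R: "(x::real^'n) = (\<Sum>l\<in>UNIV. (x $ l) *\<^sub>R axis l 1)"
  using basis_expansion[of x] by (simp add: scalar_mult_eq_scaleR)

lemma ml_bounded:
  fixes M :: "(nat \<Rightarrow> real^'m) \<Rightarrow> real^'d"
  shows "ml k M \<Longrightarrow> \<exists>C. \<forall>xi. (\<forall>i<k. supn (xi i) \<le> 1) \<longrightarrow> supn (M xi) \<le> C"
proof (induction k arbitrary: M)
  case 0
  then have "\<forall>xi. M xi = M (\<lambda>_. 0)" unfolding ml_def by blast
  then have e: "\<And>xi. M xi = M (\<lambda>_. 0)" by blast
  show ?case
  proof (intro exI allI impI)
    fix xi :: "nat \<Rightarrow> real^'m"
    show "supn (M xi) \<le> supn (M (\<lambda>_. 0))" by (subst e[of xi]) (rule order_refl)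
  qed
next
  case (Suc k)
  have dep: "\<And>xi xi'. (\<forall>i<Suc k. xi i = xi' i) \<Longrightarrow> M xi = M xi'"
    and lin: "\<And>i xi. i < Suc k \<Longrightarrow> linear (\<lambda>v. M (xi(i:=v)))"
    using Suc.prems unfolding ml_def by blast+
  define Ml where "Ml l = (\<lambda>xi. M (xi(k := axis l 1)))" for l :: 'm
  have "ml k (Ml l)" for l
    unfolding ml_def
  proof (intro conjI allI impI)
    fix xi xi' :: "nat \<Rightarrow> real^'m" assume "\<forall>i<k. xi i = xi' i"
    then show "Ml l xi = Ml l xi'" unfolding Ml_def by (intro dep) auto
  next
    fix i and xi :: "nat \<Rightarrow> real^'m" assume i: "i < k"
    have "(\<lambda>v. Ml l (xi(i := v))) = (\<lambda>v. M ((xi(k := axis l 1))(i := v)))"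
      unfolding Ml_def using i by (simp add: fun_upd_twist)
    then show "linear (\<lambda>v. Ml l (xi(i := v)))" using lin[of i] i by simp
  qed
  then have ex: "\<forall>l. \<exists>C. \<forall>xi. (\<forall>i<k. supn (xi i) \<le> 1) \<longrightarrow> supn (Ml l xi) \<le> C"
    using Suc.IH by blast
  obtain C where C0: "\<forall>l. \<forall>xi. (\<forall>i<k. supn (xi i) \<le> 1) \<longrightarrow> supn (Ml l xi) \<le> C l"
    using choice[OF ex] by blast
  then have C: "\<And>l xi. (\<forall>i<k. supn (xi i) \<le> 1) \<Longrightarrow> supn (Ml l xi) \<le> C l" by blast
  show ?case
  proof (intro exI allI impI)
    fix xi :: "nat \<Rightarrow> real^'m" assume xi: "\<forall>i<Suc k. supn (xi i) \<le> 1"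
    have "xi(k := (\<Sum>l\<in>UNIV. (xi k $ l) *\<^sub>R axis l 1)) = xi"
      by (simp only: basis_exp_R[of "xi k", symmetric] fun_upd_triv)
    then have "M xi = M (xi(k := (\<Sum>l\<in>UNIV. (xi k $ l) *\<^sub>R axis l 1)))"
      by simp
    also have "\<dots> = (\<Sum>l\<in>UNIV. (xi k $ l) *\<^sub>R Ml l xi)"
      unfolding Ml_def by (simp add: real_vector.linear_sum[OF lin[of k]] real_vector.linear_scale[OF lin[of k]])
    finally have eq: "M xi = (\<Sum>l\<in>UNIV. (xi k $ l) *\<^sub>R Ml l xi)" .
    have "supn (M xi) \<le> (\<Sum>l\<in>UNIV. supn ((xi k $ l) *\<^sub>R Ml l xi))"
      unfolding eq by (rule supn_sum) simp
    also have "\<dots> \<le> (\<Sum>l\<in>UNIV. \<bar>C l\<bar>)"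
    proof (rule sum_mono)
      fix l
      have "\<bar>xi k $ l\<bar> \<le> 1" using supn_ge[of "xi k" l] xi by force
      moreover have "supn (Ml l xi) \<le> \<bar>C l\<bar>" using C[of xi l] xi by force
      ultimately show "supn ((xi k $ l) *\<^sub>R Ml l xi) \<le> \<bar>C l\<bar>"
        unfolding supn_scale using mult_mono[of "\<bar>xi k $ l\<bar>" 1 "supn (Ml l xi)" "\<bar>C l\<bar>"]
        by (simp add: supn_nonneg)
    qed
    finally show "supn (M xi) \<le> (\<Sum>l\<in>UNIV. \<bar>C l\<bar>)" .
  qed
qed

lemma nset_ne: "{xi :: nat \<Rightarrow> real^'m. \<forall>i<k. supn (xi i) = 1} \<noteq> {}"
proof -
  obtain u :: "real^'m" where u: "supn u = 1" using exists_unit by blast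
  have m: "(\<lambda>_. u) \<in> {xi :: nat \<Rightarrow> real^'m. \<forall>i<k. supn (xi i) = 1}" using u by simp
  show ?thesis
  proof
    assume "{xi :: nat \<Rightarrow> real^'m. \<forall>i<k. supn (xi i) = 1} = {}"
    with m show False by (simp only: empty_iff)
  qed
qed

lemma ml_bdd:
  fixes M :: "(nat \<Rightarrow> real^'m) \<Rightarrow> real^'d"
  assumes "ml k M"
  shows "bdd_above ((\<lambda>xi. supn (M xi)) ` {xi. \<forall>i<k. supn (xi i) = 1})"
proof -
  obtain C where C: "\<And>xi. (\<forall>i<k. supn (xi i) \<le> 1) \<Longrightarrow> supn (M xi) \<le> C"
    using ml_bounded[OF assms] by blast
  show ?thesis
  proof (rule bdd_aboveI2[where M=C])
    fix xi :: "nat \<Rightarrow> real^'m" assume "xi \<in> {xi. \<forall>i<k. supn (xi i) = 1}"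
    then show "supn (M xi) \<le> C" by (intro C) simp
  qed
qed

lemma ml_unit:
  fixes M :: "(nat \<Rightarrow> real^'m) \<Rightarrow> real^'d"
  assumes "ml k M" "\<forall>i<k. supn (xi i) = 1"
  shows "supn (M xi) \<le> mlnorm k M"
  unfolding mlnorm_def by (rule cSUP_upper[OF _ ml_bdd[OF assms(1)]]) (simp add: assms(2))

lemma mlnorm_le:
  fixes M :: "(nat \<Rightarrow> real^'m) \<Rightarrow> real^'d"
  assumes "\<And>xi. \<forall>i<k. supn (xi i) = 1 \<Longrightarrow> supn (M xi) \<le> C"
  shows "mlnorm k M \<le> C"
  unfolding mlnorm_def using assms nset_ne by (intro cSUP_least) auto

lemma mlnorm_nonneg:
  fixes M :: "(nat \<Rightarrow> real^'m) \<Rightarrow> real^'d"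
  assumes "ml k M"
  shows "0 \<le> mlnorm k M"
proof -
  obtain xi :: "nat \<Rightarrow> real^'m" where "\<forall>i<k. supn (xi i) = 1" using nset_ne by blast
  then show ?thesis using ml_unit[OF assms] supn_nonneg by (meson order_trans)
qed

lemma ml_prod_aux:
  fixes M :: "(nat \<Rightarrow> real^'m) \<Rightarrow> real^'d"
  assumes ml: "ml k M"
  shows "n \<le> k \<Longrightarrow> (\<forall>i<k. n \<le> i \<longrightarrow> supn (xi i) = 1) \<Longrightarrow> supn (M xi) \<le> mlnorm k M * (\<Prod>i<n. supn (xi i))"
proof (induction n arbitrary: xi)
  case 0 then show ?case using ml_unit[OF ml] by simp
next
  case (Suc n)
  have lin: "linear (\<lambda>v. M (xi(n:=v)))" using ml Suc.prems unfolding ml_def by simp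
  have pnn: "0 \<le> (\<Prod>i<Suc n. supn (xi i))" by (simp add: prod_nonneg supn_nonneg)
  show ?case
  proof (cases "xi n = 0")
    case True
    then have "xi(n := 0) = xi" by (simp add: fun_eq_iff)
    then have "M xi = M (xi(n := 0))" by simp
    also have "\<dots> = 0" using real_vector.linear_0[OF lin] by simp
    finally show ?thesis using pnn mlnorm_nonneg[OF ml] by simp
  next
    case False
    define s where "s = supn (xi n)"
    have s: "s > 0" using False supn_eq_0 supn_nonneg unfolding s_def by (metis less_eq_real_def)
    define xi' where "xi' = xi(n := (1/s) *\<^sub>R xi n)"
    have "supn (xi' n) = 1" using s by (simp add: xi'_def supn_scale s_def)
    have h: "\<forall>i<k. n \<le> i \<longrightarrow> supn (xi' i) = 1"
    proof (intro allI impI)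
      fix i assume i: "i < k" "n \<le> i"
      show "supn (xi' i) = 1"
      proof (cases "i = n")
        case True then show ?thesis using \<open>supn (xi' n) = 1\<close> by simp
      next
        case False
        then have "Suc n \<le> i" using i by simp
        then show ?thesis using Suc.prems(2) i False by (simp add: xi'_def)
      qed
    qed
    have IH: "supn (M xi') \<le> mlnorm k M * (\<Prod>i<n. supn (xi' i))"
      using Suc.IH[OF _ h] Suc.prems by simp
    have pe: "(\<Prod>i<n. supn (xi' i)) = (\<Prod>i<n. supn (xi i))" by (simp add: xi'_def)
    have "xi = xi(n := s *\<^sub>R ((1/s) *\<^sub>R xi n))" using s by simp
    then have "M xi = M (xi(n := s *\<^sub>R ((1/s) *\<^sub>R xi n)))" by simp
    also have "\<dots> = s *\<^sub>R M xi'" unfolding xi'_def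
      using real_vector.linear_scale[OF lin] by simp
    finally have "supn (M xi) = s * supn (M xi')" using s by (simp add: supn_scale)
    also have "\<dots> \<le> s * (mlnorm k M * (\<Prod>i<n. supn (xi i)))"
      using IH pe s by (simp add: mult_left_mono)
    also have "\<dots> = mlnorm k M * (\<Prod>i<Suc n. supn (xi i))" by (simp add: s_def)
    finally show ?thesis .
  qed
qed

lemma ml_prod:
  fixes M :: "(nat \<Rightarrow> real^'m) \<Rightarrow> real^'d"
  assumes "ml k M"
  shows "supn (M xi) \<le> mlnorm k M * (\<Prod>i<k. supn (xi i))"
  using ml_prod_aux[OF assms, of k xi] by simp

lemma ml_pow:
  fixes M :: "(nat \<Rightarrow> real^'m) \<Rightarrow> real^'d"
  assumes "ml k M" "\<forall>i<k. supn (xi i) \<le> a"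
  shows "supn (M xi) \<le> mlnorm k M * a ^ k"
proof -
  have "(\<Prod>i<k. supn (xi i)) \<le> (\<Prod>i<k. a)"
    using assms(2) by (intro prod_mono) (simp add: supn_nonneg)
  then have "mlnorm k M * (\<Prod>i<k. supn (xi i)) \<le> mlnorm k M * a ^ k"
    using mlnorm_nonneg[OF assms(1)] by (simp add: mult_left_mono)
  then show ?thesis using ml_prod[OF assms(1), of xi] by linarith
qed

lemma ml_add:
  fixes M M' :: "(nat \<Rightarrow> real^'m) \<Rightarrow> real^'d"
  assumes "ml k M" "ml k M'" shows "ml k (\<lambda>xi. M xi + M' xi)"
  unfolding ml_def
proof (intro conjI allI impI)
  fix xi xi' :: "nat \<Rightarrow> real^'m" assume h: "\<forall>i<k. xi i = xi' i"
  have "M xi = M xi'" "M' xi = M' xi'" using assms h unfolding ml_def by blast+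
  then show "M xi + M' xi = M xi' + M' xi'" by simp
next
  fix i and xi :: "nat \<Rightarrow> real^'m" assume "i < k"
  then show "linear (\<lambda>v. M (xi(i := v)) + M' (xi(i := v)))"
    using assms unfolding ml_def by (auto intro: real_vector.module_hom_add)
qed

lemma ml_diff:
  fixes M M' :: "(nat \<Rightarrow> real^'m) \<Rightarrow> real^'d"
  assumes "ml k M" "ml k M'" shows "ml k (\<lambda>xi. M xi - M' xi)"
  unfolding ml_def
proof (intro conjI allI impI)
  fix xi xi' :: "nat \<Rightarrow> real^'m" assume h: "\<forall>i<k. xi i = xi' i"
  have "M xi = M xi'" "M' xi = M' xi'" using assms h unfolding ml_def by blast+
  then show "M xi - M' xi = M xi' - M' xi'" by simp
next
  fix i and xi :: "nat \<Rightarrow> real^'m" assume "i < k"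
  then show "linear (\<lambda>v. M (xi(i := v)) - M' (xi(i := v)))"
    using assms unfolding ml_def by (auto intro: real_vector.module_hom_sub)
qed

lemma ml_lin:
  fixes M :: "(nat \<Rightarrow> real^'m) \<Rightarrow> real^'d" and L :: "real^'d \<Rightarrow> real^'e"
  assumes "ml k M" "linear L" shows "ml k (\<lambda>xi. L (M xi))"
  unfolding ml_def
proof (intro conjI allI impI)
  fix xi xi' :: "nat \<Rightarrow> real^'m" assume h: "\<forall>i<k. xi i = xi' i"
  have "M xi = M xi'" using assms h unfolding ml_def by blast
  then show "L (M xi) = L (M xi')" by simp
next
  fix i and xi :: "nat \<Rightarrow> real^'m" assume "i < k"
  then have "linear (\<lambda>v. M (xi(i := v)))" using assms unfolding ml_def by blast
  then show "linear (\<lambda>v. L (M (xi(i := v))))" using linear_compose[OF _ assms(2)] by (simp add: o_def)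
qed

lemma ml_comp:
  fixes M :: "(nat \<Rightarrow> real^'m) \<Rightarrow> real^'d" and T :: "real^'m \<Rightarrow> real^'m"
  assumes "ml k M" "linear T"
  shows "ml k (\<lambda>xi. M (\<lambda>i. T (xi i)))"
  unfolding ml_def
proof (intro conjI allI impI)
  fix xi xi' :: "nat \<Rightarrow> real^'m" assume "\<forall>i<k. xi i = xi' i"
  then show "M (\<lambda>i. T (xi i)) = M (\<lambda>i. T (xi' i))" using assms(1) unfolding ml_def by auto
next
  fix i and xi :: "nat \<Rightarrow> real^'m" assume i: "i < k"
  have l: "linear (\<lambda>v. M ((\<lambda>j. T (xi j))(i := v)))" using assms(1) i unfolding ml_def by blast
  have "(\<lambda>v. M (\<lambda>j. T ((xi(i := v)) j))) = (\<lambda>v. M ((\<lambda>j. T (xi j))(i := v))) \<circ> T"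
    by (auto simp: o_def fun_upd_def intro!: ext arg_cong[where f=M])
  then show "linear (\<lambda>v. M (\<lambda>j. T ((xi(i := v)) j)))" using linear_compose[OF assms(2) l] by simp
qed

lemma ml_zero: "ml k (\<lambda>xi. 0)"
  unfolding ml_def by (simp add: real_vector.linear_zero)

lemma mlnorm_zero: "mlnorm k (\<lambda>xi :: nat \<Rightarrow> real^'m. 0 :: real^'d) = 0"
proof -
  have "mlnorm k (\<lambda>xi :: nat \<Rightarrow> real^'m. 0 :: real^'d) \<le> 0" by (rule mlnorm_le) simp
  moreover have "0 \<le> mlnorm k (\<lambda>xi :: nat \<Rightarrow> real^'m. 0 :: real^'d)" by (rule mlnorm_nonneg[OF ml_zero])
  ultimately show ?thesis by linarith
qed

lemma mlnorm_tri:
  fixes M :: "(nat \<Rightarrow> real^'m) \<Rightarrow> real^'d"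
  assumes "ml k M" "ml k M'"
  shows "mlnorm k M \<le> mlnorm k M' + mlnorm k (\<lambda>xi. M xi - M' xi)"
proof (rule mlnorm_le)
  fix xi :: "nat \<Rightarrow> real^'m" assume xi: "\<forall>i<k. supn (xi i) = 1"
  have "supn (M xi) \<le> supn (M' xi) + supn (M xi - M' xi)"
    using supn_add[of "M' xi" "M xi - M' xi"] by simp
  also have "\<dots> \<le> mlnorm k M' + mlnorm k (\<lambda>xi. M xi - M' xi)"
    using ml_unit[OF assms(2) xi] ml_unit[OF ml_diff[OF assms] xi] by simp
  finally show "supn (M xi) \<le> mlnorm k M' + mlnorm k (\<lambda>xi. M xi - M' xi)" .
qed



lemma mlnorm_swap: "mlnorm k (\<lambda>xi. A xi - B xi) = mlnorm k (\<lambda>xi. B xi - A xi)"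
  unfolding mlnorm_def by (simp add: supn_minus_comm)

lemma Dset_compact: "compact (Dset \<rho> :: (real^'m) set)"
  unfolding Dset_cbox by (rule compact_cbox)

lemma Dset_convex: "convex (Dset \<rho> :: (real^'m) set)"
  unfolding Dset_cbox by (rule convex_box)

lemma Dset_norm: "x \<in> Dset \<rho> \<Longrightarrow> norm (x::real^'m) \<le> real CARD('m) * \<rho>"
  using norm_le_supn[of x] unfolding Dset_def
  by (smt (verit) mem_Collect_eq mult_left_mono of_nat_0_le_iff)

context fixes \<rho> :: real assumes rho: "\<rho> > 0"
begin

lemma Dset_ne: "Dset \<rho> \<noteq> {}"
  using Dset_zero[of \<rho>] rho by auto

lemma Hr_smooth: "P \<in> Hr \<rho> r \<Longrightarrow> smooth (Dset \<rho>) r P"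
  unfolding Hr_def Cr_on_def smooth_def by blast

lemma Hr_ml: "P \<in> Hr \<rho> r \<Longrightarrow> k \<le> r \<Longrightarrow> x \<in> Dset \<rho> \<Longrightarrow> ml k (\<lambda>xi. dd (Dset \<rho>) k P xi x)"
  by (rule dd_ml[OF rho Hr_smooth])

lemma Hr_cont: "P \<in> Hr \<rho> r \<Longrightarrow> x \<in> Dset \<rho> \<Longrightarrow>
   ((\<lambda>y. mlnorm r (\<lambda>xi. dd (Dset \<rho>) r P xi y - dd (Dset \<rho>) r P xi x)) \<longlongrightarrow> 0) (at x within Dset \<rho>)"
  unfolding Hr_def Cr_on_def by blast

lemma Hr_zero_out: "P \<in> Hr \<rho> r \<Longrightarrow> x \<notin> Dset \<rho> \<Longrightarrow> P x = 0"
  unfolding Hr_def by blast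

lemma Hr_zero_at0: "P \<in> Hr \<rho> r \<Longrightarrow> i < r \<Longrightarrow> dd (Dset \<rho>) i P xi 0 = 0"
  unfolding Hr_def by blast

lemma Hnorm_bdd:
  fixes P :: "real^'m \<Rightarrow> real^'d"
  assumes P: "P \<in> Hr \<rho> r"
  shows "bdd_above ((\<lambda>x. mlnorm r (\<lambda>xi. dd (Dset \<rho>) r P xi x)) ` Dset \<rho>)"
proof -
  define h where "h x = mlnorm r (\<lambda>xi. dd (Dset \<rho>) r P xi x)" for x
  have "continuous_on (Dset \<rho>) h"
    unfolding continuous_on_def
  proof (intro ballI)
    fix x :: "real^'m" assume x: "x \<in> Dset \<rho>"
    have "((\<lambda>y. h y - h x) \<longlongrightarrow> 0) (at x within Dset \<rho>)"
    proof (rule Lim_null_comparison[OF _ Hr_cont[OF P x]])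
      show "\<forall>\<^sub>F y in at x within Dset \<rho>. norm (h y - h x) \<le> mlnorm r (\<lambda>xi. dd (Dset \<rho>) r P xi y - dd (Dset \<rho>) r P xi x)"
        unfolding eventually_at_filter
      proof (intro always_eventually allI impI)
        fix y :: "real^'m" assume y: "y \<in> Dset \<rho>"
        have a: "h y \<le> h x + mlnorm r (\<lambda>xi. dd (Dset \<rho>) r P xi y - dd (Dset \<rho>) r P xi x)"
          unfolding h_def by (rule mlnorm_tri[OF Hr_ml[OF P _ y] Hr_ml[OF P _ x]]) simp_all
        have b: "h x \<le> h y + mlnorm r (\<lambda>xi. dd (Dset \<rho>) r P xi y - dd (Dset \<rho>) r P xi x)"
          unfolding h_def mlnorm_swap[of r "\<lambda>xi. dd (Dset \<rho>) r P xi y"]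
          by (rule mlnorm_tri[OF Hr_ml[OF P _ x] Hr_ml[OF P _ y]]) simp_all
        show "norm (h y - h x) \<le> mlnorm r (\<lambda>xi. dd (Dset \<rho>) r P xi y - dd (Dset \<rho>) r P xi x)"
          using a b by simp
      qed
    qed
    then show "(h \<longlongrightarrow> h x) (at x within Dset \<rho>)"
      by (simp add: Lim_null[symmetric])
  qed
  then have "compact (h ` Dset \<rho>)" by (rule compact_continuous_image[OF _ Dset_compact])
  then have "bounded (h ` Dset \<rho>)" by (rule compact_imp_bounded)
  then show ?thesis unfolding h_def[abs_def] by (rule bounded_imp_bdd_above)
qed

lemma Hnorm_ge:
  fixes P :: "real^'m \<Rightarrow> real^'d"
  assumes "P \<in> Hr \<rho> r" "x \<in> Dset \<rho>"
  shows "mlnorm r (\<lambda>xi. dd (Dset \<rho>) r P xi x) \<le> Hnorm \<rho> r P"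
  unfolding Hnorm_def by (rule cSUP_upper[OF assms(2) Hnorm_bdd[OF assms(1)]])

lemma Hnorm_nonneg:
  fixes P :: "real^'m \<Rightarrow> real^'d"
  assumes "P \<in> Hr \<rho> r"
  shows "0 \<le> Hnorm \<rho> r P"
  using mlnorm_nonneg[OF Hr_ml[OF assms order_refl Dset_zero]] Hnorm_ge[OF assms Dset_zero] rho by force

lemma Hnorm_pow:
  fixes P :: "real^'m \<Rightarrow> real^'d"
  assumes "P \<in> Hr \<rho> r" "x \<in> Dset \<rho>" "\<forall>i<r. supn (xi i) \<le> a" "0 \<le> a"
  shows "supn (dd (Dset \<rho>) r P xi x) \<le> Hnorm \<rho> r P * a ^ r"
proof -
  have "supn (dd (Dset \<rho>) r P xi x) \<le> mlnorm r (\<lambda>xi. dd (Dset \<rho>) r P xi x) * a ^ r"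
    by (rule ml_pow[OF Hr_ml[OF assms(1) order_refl assms(2)] assms(3)])
  also have "\<dots> \<le> Hnorm \<rho> r P * a ^ r"
    by (rule mult_right_mono[OF Hnorm_ge[OF assms(1,2)]]) (simp add: assms(4))
  finally show ?thesis .
qed

lemma Hnorm_unit:
  fixes P :: "real^'m \<Rightarrow> real^'d"
  assumes "P \<in> Hr \<rho> r" "x \<in> Dset \<rho>" "\<forall>i<r. supn (xi i) = 1"
  shows "supn (dd (Dset \<rho>) r P xi x) \<le> Hnorm \<rho> r P"
  using Hnorm_pow[OF assms(1,2), of xi 1] assms(3) by simp

lemma Hnorm_le:
  fixes P :: "real^'m \<Rightarrow> real^'d"
  assumes "\<And>x xi. x \<in> Dset \<rho> \<Longrightarrow> \<forall>i<r. supn (xi i) = 1 \<Longrightarrow> supn (dd (Dset \<rho>) r P xi x) \<le> C"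
  shows "Hnorm \<rho> r P \<le> C"
  unfolding Hnorm_def using Dset_ne
  by (intro cSUP_least mlnorm_le assms) auto

lemma descent:
  fixes f :: "real^'m \<Rightarrow> real^'d"
  assumes f: "smooth (Dset \<rho>) r f" and z0: "\<And>j xi. j < r \<Longrightarrow> dd (Dset \<rho>) j f xi 0 = 0"
    and E: "\<And>z xi. z \<in> Dset \<rho> \<Longrightarrow> \<forall>i<r. supn (xi i) = 1 \<Longrightarrow> supn (dd (Dset \<rho>) r f xi z) \<le> E"
  shows "k \<le> r \<Longrightarrow> y \<in> Dset \<rho> \<Longrightarrow> \<forall>i<k. supn (xi i) = 1 \<Longrightarrow>
    supn (dd (Dset \<rho>) k f xi y) \<le> (real CARD('d) * real CARD('m) * \<rho>) ^ (r - k) * E"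
proof (induction "r - k" arbitrary: k xi y)
  case 0
  then have "k = r" by simp
  then show ?case using E 0 by simp
next
  case (Suc m)
  define cc where "cc = real CARD('d) * real CARD('m) * \<rho>"
  have kr: "k < r" using Suc by simp
  define E' where "E' = cc ^ (r - Suc k) * E"
  have IH: "\<And>xi z. z \<in> Dset \<rho> \<Longrightarrow> \<forall>i<Suc k. supn (xi i) = 1 \<Longrightarrow> supn (dd (Dset \<rho>) (Suc k) f xi z) \<le> E'"
    unfolding E'_def cc_def using Suc kr by (intro Suc.hyps) auto
  have mlE: "mlnorm (Suc k) (\<lambda>xi. dd (Dset \<rho>) (Suc k) f xi z) \<le> E'" if "z \<in> Dset \<rho>" for z
    by (rule mlnorm_le) (rule IH[OF that])
  have D0: "(0::real^'m) \<in> Dset \<rho>" by (rule Dset_zero) (use rho in simp)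
  have "0 \<le> mlnorm (Suc k) (\<lambda>xi. dd (Dset \<rho>) (Suc k) f xi 0)"
    by (rule mlnorm_nonneg[OF dd_ml[OF rho f _ D0]]) (use kr in simp)
  then have E'nn: "0 \<le> E'" using mlE[OF D0] by linarith
  define g where "g z = dd (Dset \<rho>) k f xi z" for z
  define G where "G z = frechet_derivative g (at z within Dset \<rho>)" for z
  have gd: "(g has_derivative G z) (at z within Dset \<rho>)" if "z \<in> Dset \<rho>" for z
    unfolding G_def g_def using smoothD[OF f kr that] frechet_derivative_works by blast
  have Geq: "G z h = dd (Dset \<rho>) (Suc k) f (xi(k := h)) z" for z h
  proof -
    have "dd (Dset \<rho>) k f (xi(k := h)) = dd (Dset \<rho>) k f xi" by (rule dd_slot) simp
    then show ?thesis unfolding G_def g_def by simp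
  qed
  have Gb: "onorm (G z) \<le> real CARD('d) * E'" if z: "z \<in> Dset \<rho>" for z
  proof (rule onorm_le)
    fix h :: "real^'m"
    have "supn (G z h) \<le> mlnorm (Suc k) (\<lambda>xi. dd (Dset \<rho>) (Suc k) f xi z) * (\<Prod>i<Suc k. supn ((xi(k := h)) i))"
      unfolding Geq by (rule ml_prod[OF dd_ml[OF rho f _ z]]) (use kr in simp)
    also have "(\<Prod>i<Suc k. supn ((xi(k := h)) i)) = supn h"
      using Suc.prems(3) by simp
    finally have "supn (G z h) \<le> E' * supn h"
      using mlE[OF z] supn_nonneg[of h] by (meson mult_right_mono order_trans)
    then have "norm (G z h) \<le> real CARD('d) * (E' * supn h)"
      using norm_le_supn[of "G z h"] by (smt (verit) mult_left_mono of_nat_0_le_iff)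
    also have "\<dots> \<le> real CARD('d) * E' * norm h"
      using supn_le_norm[of h] E'nn by (simp add: mult_left_mono mult.assoc)
    finally show "norm (G z h) \<le> real CARD('d) * E' * norm h" .
  qed
  have "norm (g y - g 0) \<le> real CARD('d) * E' * norm (y - 0)"
    by (rule differentiable_bound[OF Dset_convex gd Gb Suc.prems(2) D0])
  moreover have "g 0 = 0" unfolding g_def using z0 kr by simp
  ultimately have "norm (g y) \<le> real CARD('d) * E' * (real CARD('m) * \<rho>)"
    using Dset_norm[OF Suc.prems(2)] E'nn
    by (smt (verit) diff_zero mult_left_mono mult_nonneg_nonneg of_nat_0_le_iff)
  then have "supn (g y) \<le> cc * E'" unfolding cc_def using supn_le_norm[of "g y"] by (simp add: algebra_simps)
  also have "cc * E' = cc ^ (r - k) * E" unfolding E'_def using kr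
    by (metis Suc_diff_Suc mult.assoc power_Suc)
  finally show ?case unfolding g_def cc_def .
qed

lemma zero_lemma:
  fixes f :: "real^'m \<Rightarrow> real^'d"
  assumes "f \<in> Hr \<rho> r"
    and E: "\<And>z xi. z \<in> Dset \<rho> \<Longrightarrow> \<forall>i<r. supn (xi i) = 1 \<Longrightarrow> supn (dd (Dset \<rho>) r f xi z) \<le> 0"
  shows "f = (\<lambda>x. 0)"
proof
  fix x
  show "f x = 0"
  proof (cases "x \<in> Dset \<rho>")
    case True
    have "supn (dd (Dset \<rho>) 0 f (\<lambda>_. 0) x) \<le> (real CARD('d) * real CARD('m) * \<rho>) ^ (r - 0) * 0"
      by (rule descent[OF Hr_smooth[OF assms(1)] Hr_zero_at0[OF assms(1)] E]) (use True in auto)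
    then show ?thesis using supn_nonneg[of "f x"] supn_eq_0[of "f x"] by simp
  next
    case False then show ?thesis using Hr_zero_out[OF assms(1)] by simp
  qed
qed

end


definition Tp :: "real^'m^'m \<Rightarrow> nat \<Rightarrow> real^'m \<Rightarrow> real^'m" where
  "Tp \<Lambda> j = ((*v) \<Lambda> ^^ j)"

lemma Tp_linear: "linear (Tp \<Lambda> j)"
proof (induction j)
  case 0 then show ?case by (simp add: Tp_def id_def linear_id[unfolded id_def])
next
  case (Suc j)
  have "Tp \<Lambda> (Suc j) = ((*v) \<Lambda>) \<circ> Tp \<Lambda> j" by (simp add: Tp_def)
  then show ?case using linear_compose[OF Suc matrix_vector_mul_linear[of \<Lambda>]] by (simp add: o_def)
qed

lemma Tp_bl: "bounded_linear (Tp \<Lambda> j)"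
  using Tp_linear linear_conv_bounded_linear by blast

lemma Tp_0: "Tp \<Lambda> j 0 = 0"
  using real_vector.linear_0[OF Tp_linear] .

lemma Tp_norm: "supn (Tp \<Lambda> j x) \<le> opnorm_inf \<Lambda> ^ j * supn x"
proof (induction j)
  case 0 then show ?case by (simp add: Tp_def)
next
  case (Suc j)
  have "supn (Tp \<Lambda> (Suc j) x) = supn (\<Lambda> *v Tp \<Lambda> j x)" by (simp add: Tp_def)
  also have "\<dots> \<le> opnorm_inf \<Lambda> * supn (Tp \<Lambda> j x)" by (rule opnorm_bound)
  also have "\<dots> \<le> opnorm_inf \<Lambda> * (opnorm_inf \<Lambda> ^ j * supn x)"
    by (rule mult_left_mono[OF Suc opnorm_nonneg])
  finally show ?case by (simp add: mult.assoc)
qed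

lemma Tp_Dset: "opnorm_inf \<Lambda> \<le> 1 \<Longrightarrow> Tp \<Lambda> j ` Dset \<rho> \<subseteq> Dset \<rho>"
proof
  fix y assume a: "opnorm_inf \<Lambda> \<le> 1" and "y \<in> Tp \<Lambda> j ` Dset \<rho>"
  then obtain x where x: "x \<in> Dset \<rho>" "y = Tp \<Lambda> j x" by auto
  have "opnorm_inf \<Lambda> ^ j \<le> 1" by (rule power_le_one[OF opnorm_nonneg a])
  then have "opnorm_inf \<Lambda> ^ j * supn x \<le> 1 * supn x" by (rule mult_right_mono) (rule supn_nonneg)
  then show "y \<in> Dset \<rho>" using Tp_norm[of \<Lambda> j x] x unfolding Dset_def by simp
qed

lemma tendsto_within_cmp:
  fixes a b :: "'a::topological_space \<Rightarrow> real"
  assumes "\<And>y. y \<in> S \<Longrightarrow> 0 \<le> a y \<and> a y \<le> b y" "(b \<longlongrightarrow> 0) (at x within S)"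
  shows "(a \<longlongrightarrow> 0) (at x within S)"
proof (rule Lim_null_comparison[OF _ assms(2)])
  show "\<forall>\<^sub>F y in at x within S. norm (a y) \<le> b y"
    unfolding eventually_at_filter using assms(1) by (intro always_eventually) auto
qed

context fixes \<rho> :: real assumes rho: "\<rho> > 0"
begin

lemma D0: "(0::real^'m) \<in> Dset \<rho>" by (rule Dset_zero) (use rho in simp)

lemma smooth_cong:
  fixes f g :: "real^'m \<Rightarrow> real^'d"
  assumes "smooth (Dset \<rho>) k f" "\<And>y. y \<in> Dset \<rho> \<Longrightarrow> f y = g y"
  shows "smooth (Dset \<rho>) k g"
  unfolding smooth_def
proof (intro allI impI ballI)
  fix j xi and x :: "real^'m" assume j: "j < k" and x: "x \<in> Dset \<rho>"
  show "(\<lambda>y. dd (Dset \<rho>) j g xi y) differentiable (at x within Dset \<rho>)"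
    by (rule diff_cong[OF smoothD[OF assms(1) j x] x]) (rule dd_cong[OF assms(2)])
qed

lemma dd_diff:
  fixes f g :: "real^'m \<Rightarrow> real^'d"
  assumes f: "smooth (Dset \<rho>) k f" and g: "smooth (Dset \<rho>) k g"
  shows "smooth (Dset \<rho>) k (\<lambda>y. f y - g y)"
    and "j \<le> k \<Longrightarrow> x \<in> Dset \<rho> \<Longrightarrow> dd (Dset \<rho>) j (\<lambda>y. f y - g y) xi x = dd (Dset \<rho>) j f xi x - dd (Dset \<rho>) j g xi x"
proof -
  have bl: "bounded_linear (\<lambda>v::real^'d. - v)" by (rule bounded_linear_minus[OF bounded_linear_ident])
  have g': "smooth (Dset \<rho>) k (\<lambda>y. - g y)" by (rule smooth_lin[OF rho g bl])
  have e: "(\<lambda>y. f y - g y) = (\<lambda>y. f y + - g y)" by simp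
  show "smooth (Dset \<rho>) k (\<lambda>y. f y - g y)" unfolding e by (rule smooth_add[OF rho f g'])
  assume "j \<le> k" "x \<in> Dset \<rho>"
  then show "dd (Dset \<rho>) j (\<lambda>y. f y - g y) xi x = dd (Dset \<rho>) j f xi x - dd (Dset \<rho>) j g xi x"
    unfolding e using dd_add[OF rho f g'] dd_lin[OF rho g bl] by simp
qed

lemma Hr_diff:
  fixes f g :: "real^'m \<Rightarrow> real^'d"
  assumes f: "f \<in> Hr \<rho> r" and g: "g \<in> Hr \<rho> r"
  shows "(\<lambda>y. f y - g y) \<in> Hr \<rho> r"
proof -
  note sf = Hr_smooth[OF rho f] and sg = Hr_smooth[OF rho g]
  have cont: "((\<lambda>y. mlnorm r (\<lambda>xi. dd (Dset \<rho>) r (\<lambda>y. f y - g y) xi y - dd (Dset \<rho>) r (\<lambda>y. f y - g y) xi x)) \<longlongrightarrow> 0) (at x within Dset \<rho>)"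
    if x: "x \<in> Dset \<rho>" for x
  proof (rule tendsto_within_cmp)
    show "((\<lambda>y. mlnorm r (\<lambda>xi. dd (Dset \<rho>) r f xi y - dd (Dset \<rho>) r f xi x) + mlnorm r (\<lambda>xi. dd (Dset \<rho>) r g xi y - dd (Dset \<rho>) r g xi x)) \<longlongrightarrow> 0) (at x within Dset \<rho>)"
      using tendsto_add[OF Hr_cont[OF rho f x] Hr_cont[OF rho g x]] by simp
    fix y :: "real^'m" assume y: "y \<in> Dset \<rho>"
    have mlf: "ml r (\<lambda>xi. dd (Dset \<rho>) r f xi y - dd (Dset \<rho>) r f xi x)"
      by (rule ml_diff; rule Hr_ml[OF rho f order_refl]) (use x y in auto)
    have mlg: "ml r (\<lambda>xi. dd (Dset \<rho>) r g xi y - dd (Dset \<rho>) r g xi x)"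
      by (rule ml_diff; rule Hr_ml[OF rho g order_refl]) (use x y in auto)
    have e: "\<And>z xi. z \<in> Dset \<rho> \<Longrightarrow> dd (Dset \<rho>) r (\<lambda>y. f y - g y) xi z = dd (Dset \<rho>) r f xi z - dd (Dset \<rho>) r g xi z"
      by (rule dd_diff(2)[OF sf sg order_refl])
    have ml: "ml r (\<lambda>xi. dd (Dset \<rho>) r (\<lambda>y. f y - g y) xi y - dd (Dset \<rho>) r (\<lambda>y. f y - g y) xi x)"
      by (rule ml_diff; rule dd_ml[OF rho dd_diff(1)[OF sf sg] order_refl]) (use x y in auto)
    show "0 \<le> mlnorm r (\<lambda>xi. dd (Dset \<rho>) r (\<lambda>y. f y - g y) xi y - dd (Dset \<rho>) r (\<lambda>y. f y - g y) xi x) \<and>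
      mlnorm r (\<lambda>xi. dd (Dset \<rho>) r (\<lambda>y. f y - g y) xi y - dd (Dset \<rho>) r (\<lambda>y. f y - g y) xi x)
      \<le> mlnorm r (\<lambda>xi. dd (Dset \<rho>) r f xi y - dd (Dset \<rho>) r f xi x) + mlnorm r (\<lambda>xi. dd (Dset \<rho>) r g xi y - dd (Dset \<rho>) r g xi x)"
    proof (intro conjI mlnorm_nonneg[OF ml] mlnorm_le)
      fix xi :: "nat \<Rightarrow> real^'m" assume xi: "\<forall>i<r. supn (xi i) = 1"
      have "supn (dd (Dset \<rho>) r (\<lambda>y. f y - g y) xi y - dd (Dset \<rho>) r (\<lambda>y. f y - g y) xi x)
        = supn ((dd (Dset \<rho>) r f xi y - dd (Dset \<rho>) r f xi x) - (dd (Dset \<rho>) r g xi y - dd (Dset \<rho>) r g xi x))"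
        using x y by (simp add: e algebra_simps)
      also have "\<dots> \<le> supn (dd (Dset \<rho>) r f xi y - dd (Dset \<rho>) r f xi x) + supn (dd (Dset \<rho>) r g xi y - dd (Dset \<rho>) r g xi x)"
        by (rule supn_diff)
      also have "\<dots> \<le> mlnorm r (\<lambda>xi. dd (Dset \<rho>) r f xi y - dd (Dset \<rho>) r f xi x) + mlnorm r (\<lambda>xi. dd (Dset \<rho>) r g xi y - dd (Dset \<rho>) r g xi x)"
        by (intro add_mono ml_unit[OF mlf xi] ml_unit[OF mlg xi])
      finally show "supn (dd (Dset \<rho>) r (\<lambda>y. f y - g y) xi y - dd (Dset \<rho>) r (\<lambda>y. f y - g y) xi x) \<le> \<dots>" .
    qed
  qed
  show ?thesis
    unfolding Hr_def Cr_on_def mem_Collect_eq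
  proof (intro conjI)
    show "\<forall>k<r. \<forall>xi. \<forall>x\<in>Dset \<rho>. (\<lambda>y. dd (Dset \<rho>) k (\<lambda>y. f y - g y) xi y) differentiable (at x within Dset \<rho>)"
      using dd_diff(1)[OF sf sg] unfolding smooth_def by blast
    show "\<forall>x\<in>Dset \<rho>. ((\<lambda>y. mlnorm r (\<lambda>xi. dd (Dset \<rho>) r (\<lambda>y. f y - g y) xi y - dd (Dset \<rho>) r (\<lambda>y. f y - g y) xi x)) \<longlongrightarrow> 0) (at x within Dset \<rho>)"
      using cont by blast
    show "\<forall>x. x \<notin> Dset \<rho> \<longrightarrow> f x - g x = 0" using Hr_zero_out[OF rho f] Hr_zero_out[OF rho g] by simp
    show "\<forall>i<r. \<forall>xi. dd (Dset \<rho>) i (\<lambda>y. f y - g y) xi 0 = 0" 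
    proof (intro allI impI)
      fix i xi assume i: "i < r"
      have "dd (Dset \<rho>) i (\<lambda>y. f y - g y) xi 0 = dd (Dset \<rho>) i f xi 0 - dd (Dset \<rho>) i g xi 0"
        by (rule dd_diff(2)[OF sf sg]) (use i D0 in auto)
      then show "dd (Dset \<rho>) i (\<lambda>y. f y - g y) xi 0 = 0" using i Hr_zero_at0[OF rho f] Hr_zero_at0[OF rho g] by simp
    qed
  qed
qed

lemma Hr_mat:
  fixes f :: "real^'m \<Rightarrow> real^'d" and A :: "real^'d^'e"
  assumes f: "f \<in> Hr \<rho> r"
  shows "(\<lambda>y. A *v f y) \<in> Hr \<rho> r"
proof -
  note sf = Hr_smooth[OF rho f]
  have bl: "bounded_linear (\<lambda>v::real^'d. A *v v)" using linear_conv_bounded_linear by auto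
  have e: "\<And>j z xi. j \<le> r \<Longrightarrow> z \<in> Dset \<rho> \<Longrightarrow> dd (Dset \<rho>) j (\<lambda>y. A *v f y) xi z = A *v dd (Dset \<rho>) j f xi z"
    by (rule dd_lin[OF rho sf bl])
  have cont: "((\<lambda>y. mlnorm r (\<lambda>xi. dd (Dset \<rho>) r (\<lambda>y. A *v f y) xi y - dd (Dset \<rho>) r (\<lambda>y. A *v f y) xi x)) \<longlongrightarrow> 0) (at x within Dset \<rho>)"
    if x: "x \<in> Dset \<rho>" for x
  proof (rule tendsto_within_cmp)
    show "((\<lambda>y. opnorm_inf A * mlnorm r (\<lambda>xi. dd (Dset \<rho>) r f xi y - dd (Dset \<rho>) r f xi x)) \<longlongrightarrow> 0) (at x within Dset \<rho>)"
      using tendsto_mult_left[OF Hr_cont[OF rho f x], of "opnorm_inf A"] by simp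
    fix y :: "real^'m" assume y: "y \<in> Dset \<rho>"
    have mlf: "ml r (\<lambda>xi. dd (Dset \<rho>) r f xi y - dd (Dset \<rho>) r f xi x)"
      by (rule ml_diff; rule Hr_ml[OF rho f order_refl]) (use x y in auto)
    have ml: "ml r (\<lambda>xi. dd (Dset \<rho>) r (\<lambda>y. A *v f y) xi y - dd (Dset \<rho>) r (\<lambda>y. A *v f y) xi x)"
      by (rule ml_diff; rule dd_ml[OF rho smooth_lin[OF rho sf bl] order_refl]) (use x y in auto)
    show "0 \<le> mlnorm r (\<lambda>xi. dd (Dset \<rho>) r (\<lambda>y. A *v f y) xi y - dd (Dset \<rho>) r (\<lambda>y. A *v f y) xi x) \<and>
      mlnorm r (\<lambda>xi. dd (Dset \<rho>) r (\<lambda>y. A *v f y) xi y - dd (Dset \<rho>) r (\<lambda>y. A *v f y) xi x)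
      \<le> opnorm_inf A * mlnorm r (\<lambda>xi. dd (Dset \<rho>) r f xi y - dd (Dset \<rho>) r f xi x)"
    proof (intro conjI mlnorm_nonneg[OF ml] mlnorm_le)
      fix xi :: "nat \<Rightarrow> real^'m" assume xi: "\<forall>i<r. supn (xi i) = 1"
      have "supn (dd (Dset \<rho>) r (\<lambda>y. A *v f y) xi y - dd (Dset \<rho>) r (\<lambda>y. A *v f y) xi x)
        = supn (A *v (dd (Dset \<rho>) r f xi y - dd (Dset \<rho>) r f xi x))"
        using x y by (simp add: e matrix_vector_mult_diff_distrib)
      also have "\<dots> \<le> opnorm_inf A * supn (dd (Dset \<rho>) r f xi y - dd (Dset \<rho>) r f xi x)"
        by (rule opnorm_bound)
      also have "\<dots> \<le> opnorm_inf A * mlnorm r (\<lambda>xi. dd (Dset \<rho>) r f xi y - dd (Dset \<rho>) r f xi x)"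
        by (intro mult_left_mono ml_unit[OF mlf xi] opnorm_nonneg)
      finally show "supn (dd (Dset \<rho>) r (\<lambda>y. A *v f y) xi y - dd (Dset \<rho>) r (\<lambda>y. A *v f y) xi x) \<le> \<dots>" .
    qed
  qed
  show ?thesis
    unfolding Hr_def Cr_on_def mem_Collect_eq
  proof (intro conjI)
    show "\<forall>k<r. \<forall>xi. \<forall>x\<in>Dset \<rho>. (\<lambda>y. dd (Dset \<rho>) k (\<lambda>y. A *v f y) xi y) differentiable (at x within Dset \<rho>)"
      using smooth_lin[OF rho sf bl] unfolding smooth_def by blast
    show "\<forall>x\<in>Dset \<rho>. ((\<lambda>y. mlnorm r (\<lambda>xi. dd (Dset \<rho>) r (\<lambda>y. A *v f y) xi y - dd (Dset \<rho>) r (\<lambda>y. A *v f y) xi x)) \<longlongrightarrow> 0) (at x within Dset \<rho>)"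
      using cont by blast
    show "\<forall>x. x \<notin> Dset \<rho> \<longrightarrow> A *v f x = 0" using Hr_zero_out[OF rho f] by simp
    show "\<forall>i<r. \<forall>xi. dd (Dset \<rho>) i (\<lambda>y. A *v f y) xi 0 = 0" 
    proof (intro allI impI)
      fix i xi assume i: "i < r"
      have "dd (Dset \<rho>) i (\<lambda>y. A *v f y) xi 0 = A *v dd (Dset \<rho>) i f xi 0"
        by (rule e) (use i D0 in auto)
      then show "dd (Dset \<rho>) i (\<lambda>y. A *v f y) xi 0 = 0" using i Hr_zero_at0[OF rho f] by simp
    qed
  qed
qed

end


lemma Lop_diff: "Lop \<rho> N B \<Lambda> (\<lambda>x. f x - g x) = (\<lambda>x. Lop \<rho> N B \<Lambda> f x - Lop \<rho> N B \<Lambda> g x)"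
  unfolding Lop_def by (auto simp: matrix_vector_mult_diff_distrib sum_subtractf)

lemma Lop_on: "x \<in> Dset \<rho> \<Longrightarrow> Lop \<rho> N B \<Lambda> \<phi> x = (\<Sum>j=0..N. B j *v \<phi> (Tp \<Lambda> j x))"
  unfolding Lop_def Tp_def by simp

lemma Lop_out: "x \<notin> Dset \<rho> \<Longrightarrow> Lop \<rho> N B \<Lambda> \<phi> x = 0"
  unfolding Lop_def by simp

context fixes \<rho> :: real assumes rho: "\<rho> > 0"
begin

lemma Lop_dd:
  fixes \<phi> :: "real^'m \<Rightarrow> real^'d"
  assumes sp: "smooth (Dset \<rho>) r \<phi>" and L1: "opnorm_inf \<Lambda> \<le> 1"
  shows "smooth (Dset \<rho>) r (Lop \<rho> N B \<Lambda> \<phi>)"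
    and "k \<le> r \<Longrightarrow> x \<in> Dset \<rho> \<Longrightarrow> dd (Dset \<rho>) k (Lop \<rho> N B \<Lambda> \<phi>) xi x
        = (\<Sum>j=0..N. B j *v dd (Dset \<rho>) k \<phi> (\<lambda>i. Tp \<Lambda> j (xi i)) (Tp \<Lambda> j x))"
proof -
  define F where "F j = (\<lambda>y. B j *v \<phi> (Tp \<Lambda> j y))" for j
  have bl: "bounded_linear (\<lambda>v::real^'d. B j *v v)" for j using linear_conv_bounded_linear by auto
  have sF: "smooth (Dset \<rho>) r (F j)" for j
    unfolding F_def by (intro smooth_lin[OF rho _ bl] smooth_comp[OF rho sp Tp_linear Tp_Dset[OF L1]])
  have ddF: "dd (Dset \<rho>) k (F j) xi x = B j *v dd (Dset \<rho>) k \<phi> (\<lambda>i. Tp \<Lambda> j (xi i)) (Tp \<Lambda> j x)"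
    if "k \<le> r" "x \<in> Dset \<rho>" for k j x xi
  proof -
    have "Tp \<Lambda> j x \<in> Dset \<rho>" using Tp_Dset[OF L1] that(2) by blast
    then show ?thesis unfolding F_def
      using dd_lin[OF rho smooth_comp[OF rho sp Tp_linear Tp_Dset[OF L1]] bl that]
        dd_comp[OF rho sp Tp_linear Tp_Dset[OF L1] that] by simp
  qed
  have S: "smooth (Dset \<rho>) r (\<lambda>y. \<Sum>j\<in>{0..N}. F j y)"
    and D: "\<And>i x xi. i \<le> r \<Longrightarrow> x \<in> Dset \<rho> \<Longrightarrow> dd (Dset \<rho>) i (\<lambda>y. \<Sum>j\<in>{0..N}. F j y) xi x = (\<Sum>j\<in>{0..N}. dd (Dset \<rho>) i (F j) xi x)"
  proof -
    have "smooth (Dset \<rho>) r (\<lambda>y. \<Sum>j\<in>{0..N}. F j y) \<and>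
      (\<forall>i\<le>r. \<forall>x\<in>Dset \<rho>. \<forall>xi. dd (Dset \<rho>) i (\<lambda>y. \<Sum>j\<in>{0..N}. F j y) xi x = (\<Sum>j\<in>{0..N}. dd (Dset \<rho>) i (F j) xi x))"
      by (rule dd_sum[OF rho]) (simp_all add: sF)
    then show "smooth (Dset \<rho>) r (\<lambda>y. \<Sum>j\<in>{0..N}. F j y)"
      and "\<And>i x xi. i \<le> r \<Longrightarrow> x \<in> Dset \<rho> \<Longrightarrow> dd (Dset \<rho>) i (\<lambda>y. \<Sum>j\<in>{0..N}. F j y) xi x = (\<Sum>j\<in>{0..N}. dd (Dset \<rho>) i (F j) xi x)"
      by blast+
  qed
  have eq: "\<And>y. y \<in> Dset \<rho> \<Longrightarrow> (\<Sum>j\<in>{0..N}. F j y) = Lop \<rho> N B \<Lambda> \<phi> y"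
    unfolding F_def by (simp add: Lop_on)
  show "smooth (Dset \<rho>) r (Lop \<rho> N B \<Lambda> \<phi>)" by (rule smooth_cong[OF rho S eq])
  assume k: "k \<le> r" and x: "x \<in> Dset \<rho>"
  have "dd (Dset \<rho>) k (Lop \<rho> N B \<Lambda> \<phi>) xi x = dd (Dset \<rho>) k (\<lambda>y. \<Sum>j\<in>{0..N}. F j y) xi x"
    by (rule dd_cong[OF _ x]) (simp add: eq)
  also have "\<dots> = (\<Sum>j=0..N. B j *v dd (Dset \<rho>) k \<phi> (\<lambda>i. Tp \<Lambda> j (xi i)) (Tp \<Lambda> j x))"
    using D[OF k x] ddF[OF k x] by simp
  finally show "dd (Dset \<rho>) k (Lop \<rho> N B \<Lambda> \<phi>) xi x = (\<Sum>j=0..N. B j *v dd (Dset \<rho>) k \<phi> (\<lambda>i. Tp \<Lambda> j (xi i)) (Tp \<Lambda> j x))" .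
qed

lemma cont_comp:
  fixes \<phi> :: "real^'m \<Rightarrow> real^'d"
  assumes P: "\<phi> \<in> Hr \<rho> r" and T: "bounded_linear T" "T ` Dset \<rho> \<subseteq> Dset \<rho>" and x: "x \<in> Dset \<rho>"
  shows "((\<lambda>y. mlnorm r (\<lambda>xi. dd (Dset \<rho>) r \<phi> xi (T y) - dd (Dset \<rho>) r \<phi> xi (T x))) \<longlongrightarrow> 0) (at x within Dset \<rho>)"
proof -
  define q where "q z = mlnorm r (\<lambda>xi. dd (Dset \<rho>) r \<phi> xi z - dd (Dset \<rho>) r \<phi> xi (T x))" for z
  have Tx: "T x \<in> Dset \<rho>" using T x by blast
  have q0: "q (T x) = 0" unfolding q_def using mlnorm_zero by simp
  have "continuous (at (T x) within Dset \<rho>) q"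
    unfolding continuous_within q0 unfolding q_def by (rule Hr_cont[OF rho P Tx])
  then have "continuous (at (T x) within T ` Dset \<rho>) q" by (rule continuous_within_subset[OF _ T(2)])
  then have "continuous (at x within Dset \<rho>) (\<lambda>y. q (T y))"
    by (rule continuous_within_compose2[OF linear_continuous_within[OF T(1)]])
  then show ?thesis unfolding continuous_within q0 unfolding q_def .
qed

lemma Hr_Lop:
  fixes \<phi> :: "real^'m \<Rightarrow> real^'d"
  assumes P: "\<phi> \<in> Hr \<rho> r" and L1: "opnorm_inf \<Lambda> \<le> 1"
  shows "Lop \<rho> N B \<Lambda> \<phi> \<in> Hr \<rho> r"
proof -
  note sp = Hr_smooth[OF rho P]
  have sL: "smooth (Dset \<rho>) r (Lop \<rho> N B \<Lambda> \<phi>)" by (rule Lop_dd(1)[OF sp L1])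
  have dL: "\<And>k x xi. k \<le> r \<Longrightarrow> x \<in> Dset \<rho> \<Longrightarrow> dd (Dset \<rho>) k (Lop \<rho> N B \<Lambda> \<phi>) xi x
        = (\<Sum>j=0..N. B j *v dd (Dset \<rho>) k \<phi> (\<lambda>i. Tp \<Lambda> j (xi i)) (Tp \<Lambda> j x))"
    by (rule Lop_dd(2)[OF sp L1])
  define a where "a j = opnorm_inf \<Lambda> ^ j" for j
  have a0: "0 \<le> a j" for j unfolding a_def by (simp add: opnorm_nonneg)
  have cont: "((\<lambda>y. mlnorm r (\<lambda>xi. dd (Dset \<rho>) r (Lop \<rho> N B \<Lambda> \<phi>) xi y - dd (Dset \<rho>) r (Lop \<rho> N B \<Lambda> \<phi>) xi x)) \<longlongrightarrow> 0) (at x within Dset \<rho>)"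
    if x: "x \<in> Dset \<rho>" for x
  proof (rule tendsto_within_cmp)
    show "((\<lambda>y. \<Sum>j=0..N. opnorm_inf (B j) * a j ^ r * mlnorm r (\<lambda>xi. dd (Dset \<rho>) r \<phi> xi (Tp \<Lambda> j y) - dd (Dset \<rho>) r \<phi> xi (Tp \<Lambda> j x))) \<longlongrightarrow> 0) (at x within Dset \<rho>)"
      by (intro tendsto_null_sum tendsto_mult_right_zero cont_comp[OF P Tp_bl Tp_Dset[OF L1] x])
    fix y :: "real^'m" assume y: "y \<in> Dset \<rho>"
    have ml: "ml r (\<lambda>xi. dd (Dset \<rho>) r (Lop \<rho> N B \<Lambda> \<phi>) xi y - dd (Dset \<rho>) r (Lop \<rho> N B \<Lambda> \<phi>) xi x)"
      by (rule ml_diff; rule dd_ml[OF rho sL order_refl]) (use x y in auto)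
    show "0 \<le> mlnorm r (\<lambda>xi. dd (Dset \<rho>) r (Lop \<rho> N B \<Lambda> \<phi>) xi y - dd (Dset \<rho>) r (Lop \<rho> N B \<Lambda> \<phi>) xi x) \<and>
      mlnorm r (\<lambda>xi. dd (Dset \<rho>) r (Lop \<rho> N B \<Lambda> \<phi>) xi y - dd (Dset \<rho>) r (Lop \<rho> N B \<Lambda> \<phi>) xi x)
      \<le> (\<Sum>j=0..N. opnorm_inf (B j) * a j ^ r * mlnorm r (\<lambda>xi. dd (Dset \<rho>) r \<phi> xi (Tp \<Lambda> j y) - dd (Dset \<rho>) r \<phi> xi (Tp \<Lambda> j x)))"
    proof (intro conjI mlnorm_nonneg[OF ml] mlnorm_le)
      fix xi :: "nat \<Rightarrow> real^'m" assume xi: "\<forall>i<r. supn (xi i) = 1"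
      define M where "M j = (\<lambda>xi. dd (Dset \<rho>) r \<phi> xi (Tp \<Lambda> j y) - dd (Dset \<rho>) r \<phi> xi (Tp \<Lambda> j x))" for j
      have Ty: "Tp \<Lambda> j y \<in> Dset \<rho>" and Tx: "Tp \<Lambda> j x \<in> Dset \<rho>" for j
        using Tp_Dset[OF L1] x y by blast+
      have mlM: "ml r (M j)" for j
        unfolding M_def by (rule ml_diff; rule Hr_ml[OF rho P order_refl]) (use Tx Ty in auto)
      have "dd (Dset \<rho>) r (Lop \<rho> N B \<Lambda> \<phi>) xi y - dd (Dset \<rho>) r (Lop \<rho> N B \<Lambda> \<phi>) xi x
          = (\<Sum>j=0..N. B j *v M j (\<lambda>i. Tp \<Lambda> j (xi i)))"
        unfolding M_def using x y by (simp add: dL sum_subtractf matrix_vector_mult_diff_distrib)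
      then have "supn (dd (Dset \<rho>) r (Lop \<rho> N B \<Lambda> \<phi>) xi y - dd (Dset \<rho>) r (Lop \<rho> N B \<Lambda> \<phi>) xi x)
          \<le> (\<Sum>j=0..N. supn (B j *v M j (\<lambda>i. Tp \<Lambda> j (xi i))))"
        using supn_sum[of "{0..N}"] by simp
      also have "\<dots> \<le> (\<Sum>j=0..N. opnorm_inf (B j) * a j ^ r * mlnorm r (M j))"
      proof (rule sum_mono)
        fix j
        have "\<forall>i<r. supn (Tp \<Lambda> j (xi i)) \<le> a j"
          using Tp_norm[of \<Lambda> j] xi unfolding a_def by (metis mult.right_neutral)
        then have "supn (M j (\<lambda>i. Tp \<Lambda> j (xi i))) \<le> mlnorm r (M j) * a j ^ r"
          by (rule ml_pow[OF mlM])
        then have "opnorm_inf (B j) * supn (M j (\<lambda>i. Tp \<Lambda> j (xi i))) \<le> opnorm_inf (B j) * (mlnorm r (M j) * a j ^ r)"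
          by (rule mult_left_mono[OF _ opnorm_nonneg])
        then show "supn (B j *v M j (\<lambda>i. Tp \<Lambda> j (xi i))) \<le> opnorm_inf (B j) * a j ^ r * mlnorm r (M j)"
          using opnorm_bound[of "B j"] by (smt (verit) mult.assoc mult.commute)
      qed
      finally show "supn (dd (Dset \<rho>) r (Lop \<rho> N B \<Lambda> \<phi>) xi y - dd (Dset \<rho>) r (Lop \<rho> N B \<Lambda> \<phi>) xi x) \<le> \<dots>"
        unfolding M_def .
    qed
  qed
  show ?thesis
    unfolding Hr_def Cr_on_def mem_Collect_eq
  proof (intro conjI)
    show "\<forall>k<r. \<forall>xi. \<forall>x\<in>Dset \<rho>. (\<lambda>y. dd (Dset \<rho>) k (Lop \<rho> N B \<Lambda> \<phi>) xi y) differentiable (at x within Dset \<rho>)"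
      using sL unfolding smooth_def by blast
    show "\<forall>x\<in>Dset \<rho>. ((\<lambda>y. mlnorm r (\<lambda>xi. dd (Dset \<rho>) r (Lop \<rho> N B \<Lambda> \<phi>) xi y - dd (Dset \<rho>) r (Lop \<rho> N B \<Lambda> \<phi>) xi x)) \<longlongrightarrow> 0) (at x within Dset \<rho>)"
      using cont by blast
    show "\<forall>x. x \<notin> Dset \<rho> \<longrightarrow> Lop \<rho> N B \<Lambda> \<phi> x = 0" by (simp add: Lop_out)
    show "\<forall>i<r. \<forall>xi. dd (Dset \<rho>) i (Lop \<rho> N B \<Lambda> \<phi>) xi 0 = 0"
    proof (intro allI impI)
      fix i xi assume i: "i < r"
      have "dd (Dset \<rho>) i (Lop \<rho> N B \<Lambda> \<phi>) xi 0 = (\<Sum>j=0..N. B j *v dd (Dset \<rho>) i \<phi> (\<lambda>k. Tp \<Lambda> j (xi k)) (Tp \<Lambda> j 0))"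
        by (rule dL) (use i D0[OF rho] in auto)
      then show "dd (Dset \<rho>) i (Lop \<rho> N B \<Lambda> \<phi>) xi 0 = 0" using i Hr_zero_at0[OF rho P] by (simp add: Tp_0)
    qed
  qed
qed

end


lemma matrix_inv_left: "invertible A \<Longrightarrow> matrix_inv A ** A = mat 1"
  unfolding invertible_def matrix_inv_def by (metis (mono_tags, lifting) someI_ex)

context fixes \<rho> :: real assumes rho: "\<rho> > 0"
begin

lemma Hnorm_zero: "Hnorm \<rho> r (\<lambda>x::real^'m. 0::real^'d) \<le> 0"
  by (rule Hnorm_le[OF rho]) (simp add: dd_zero[OF rho])

lemma est:
  fixes \<phi> :: "real^'m \<Rightarrow> real^'d" and B :: "nat \<Rightarrow> real^'d^'d"
  assumes P: "\<phi> \<in> Hr \<rho> r" and inv: "invertible (B 0)" and mu: "opnorm_inf \<Lambda> ^ r \<le> \<mu>"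
    and L1: "opnorm_inf \<Lambda> \<le> 1" and x: "x \<in> Dset \<rho>" and xi: "\<forall>i<r. supn (xi i) = 1"
  shows "supn (dd (Dset \<rho>) r \<phi> xi x - matrix_inv (B 0) *v dd (Dset \<rho>) r (Lop \<rho> N B \<Lambda> \<phi>) xi x)
     \<le> (\<Sum>i=1..N. \<mu> ^ i * opnorm_inf (matrix_inv (B 0) ** B i)) * Hnorm \<rho> r \<phi>"
proof -
  define Mi where "Mi = matrix_inv (B 0)"
  define w where "w j = dd (Dset \<rho>) r \<phi> (\<lambda>i. Tp \<Lambda> j (xi i)) (Tp \<Lambda> j x)" for j
  have MB: "Mi ** B 0 = mat 1" unfolding Mi_def by (rule matrix_inv_left[OF inv])
  have "dd (Dset \<rho>) r (Lop \<rho> N B \<Lambda> \<phi>) xi x = (\<Sum>j=0..N. B j *v w j)"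
    unfolding w_def by (rule Lop_dd(2)[OF rho Hr_smooth[OF rho P] L1 order_refl x])
  also have "\<dots> = B 0 *v w 0 + (\<Sum>j=1..N. B j *v w j)"
    by (simp add: sum.atLeast_Suc_atMost)
  finally have e1: "dd (Dset \<rho>) r (Lop \<rho> N B \<Lambda> \<phi>) xi x = B 0 *v w 0 + (\<Sum>j=1..N. B j *v w j)" .
  have w0: "w 0 = dd (Dset \<rho>) r \<phi> xi x" unfolding w_def Tp_def by simp
  have "Mi *v dd (Dset \<rho>) r (Lop \<rho> N B \<Lambda> \<phi>) xi x = w 0 + (\<Sum>j=1..N. (Mi ** B j) *v w j)"
    unfolding e1 matrix_vector_right_distrib matrix_vector_mul_assoc MB matrix_vector_mul_lid
      real_vector.linear_sum[OF matrix_vector_mul_linear] by simp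
  then have "dd (Dset \<rho>) r \<phi> xi x - Mi *v dd (Dset \<rho>) r (Lop \<rho> N B \<Lambda> \<phi>) xi x = - (\<Sum>j=1..N. (Mi ** B j) *v w j)"
    using w0 by simp
  then have "supn (dd (Dset \<rho>) r \<phi> xi x - Mi *v dd (Dset \<rho>) r (Lop \<rho> N B \<Lambda> \<phi>) xi x)
      \<le> (\<Sum>j=1..N. supn ((Mi ** B j) *v w j))"
    using supn_sum[of "{1..N}"] by (simp add: supn_neg)
  also have "\<dots> \<le> (\<Sum>j=1..N. \<mu> ^ j * opnorm_inf (Mi ** B j) * Hnorm \<rho> r \<phi>)"
  proof (rule sum_mono)
    fix j
    have Tx: "Tp \<Lambda> j x \<in> Dset \<rho>" using Tp_Dset[OF L1] x by blast
    have a: "\<forall>i<r. supn (Tp \<Lambda> j (xi i)) \<le> opnorm_inf \<Lambda> ^ j"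
      using Tp_norm[of \<Lambda> j] xi by (metis mult.right_neutral)
    have "supn (w j) \<le> Hnorm \<rho> r \<phi> * (opnorm_inf \<Lambda> ^ j) ^ r"
      unfolding w_def by (rule Hnorm_pow[OF rho P Tx a]) (simp add: opnorm_nonneg)
    also have "(opnorm_inf \<Lambda> ^ j) ^ r = (opnorm_inf \<Lambda> ^ r) ^ j"
      by (metis mult.commute power_mult)
    also have "Hnorm \<rho> r \<phi> * (opnorm_inf \<Lambda> ^ r) ^ j \<le> Hnorm \<rho> r \<phi> * \<mu> ^ j"
      by (intro mult_left_mono power_mono mu Hnorm_nonneg[OF rho P]) (simp add: opnorm_nonneg)
    finally have "supn (w j) \<le> Hnorm \<rho> r \<phi> * \<mu> ^ j" .
    then have "opnorm_inf (Mi ** B j) * supn (w j) \<le> opnorm_inf (Mi ** B j) * (Hnorm \<rho> r \<phi> * \<mu> ^ j)"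
      by (rule mult_left_mono[OF _ opnorm_nonneg])
    then show "supn ((Mi ** B j) *v w j) \<le> \<mu> ^ j * opnorm_inf (Mi ** B j) * Hnorm \<rho> r \<phi>"
      using opnorm_bound[of "Mi ** B j" "w j"] by (simp add: algebra_simps)
  qed
  also have "\<dots> = (\<Sum>i=1..N. \<mu> ^ i * opnorm_inf (Mi ** B i)) * Hnorm \<rho> r \<phi>"
    by (simp add: sum_distrib_right)
  finally show ?thesis unfolding Mi_def .
qed

lemma est2:
  fixes \<phi> :: "real^'m \<Rightarrow> real^'d" and B :: "nat \<Rightarrow> real^'d^'d"
  assumes P: "\<phi> \<in> Hr \<rho> r" and inv: "invertible (B 0)" and mu: "opnorm_inf \<Lambda> ^ r \<le> \<mu>"
    and L1: "opnorm_inf \<Lambda> \<le> 1"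
  shows "Hnorm \<rho> r \<phi> \<le> opnorm_inf (matrix_inv (B 0)) * Hnorm \<rho> r (Lop \<rho> N B \<Lambda> \<phi>)
      + (\<Sum>i=1..N. \<mu> ^ i * opnorm_inf (matrix_inv (B 0) ** B i)) * Hnorm \<rho> r \<phi>"
proof (rule Hnorm_le[OF rho])
  fix x :: "real^'m" and xi :: "nat \<Rightarrow> real^'m" assume x: "x \<in> Dset \<rho>" and xi: "\<forall>i<r. supn (xi i) = 1"
  define a where "a = dd (Dset \<rho>) r \<phi> xi x"
  define b where "b = dd (Dset \<rho>) r (Lop \<rho> N B \<Lambda> \<phi>) xi x"
  have "supn a \<le> supn (a - matrix_inv (B 0) *v b) + supn (matrix_inv (B 0) *v b)"
    using supn_add[of "a - matrix_inv (B 0) *v b" "matrix_inv (B 0) *v b"] by simp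
  moreover have "supn (matrix_inv (B 0) *v b) \<le> opnorm_inf (matrix_inv (B 0)) * Hnorm \<rho> r (Lop \<rho> N B \<Lambda> \<phi>)"
    using opnorm_bound[of "matrix_inv (B 0)" b]
      mult_left_mono[OF Hnorm_unit[OF rho Hr_Lop[OF rho P L1] x xi, of N B] opnorm_nonneg[of "matrix_inv (B 0)"]]
    unfolding b_def by linarith
  moreover have "supn (a - matrix_inv (B 0) *v b) \<le> (\<Sum>i=1..N. \<mu> ^ i * opnorm_inf (matrix_inv (B 0) ** B i)) * Hnorm \<rho> r \<phi>"
    unfolding a_def b_def by (rule est[where B=B, OF P inv mu L1 x xi])
  ultimately show "supn (dd (Dset \<rho>) r \<phi> xi x) \<le> opnorm_inf (matrix_inv (B 0)) * Hnorm \<rho> r (Lop \<rho> N B \<Lambda> \<phi>)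
      + (\<Sum>i=1..N. \<mu> ^ i * opnorm_inf (matrix_inv (B 0) ** B i)) * Hnorm \<rho> r \<phi>"
    unfolding a_def by linarith
qed

lemma Lop_inj:
  fixes f g :: "real^'m \<Rightarrow> real^'d" and B :: "nat \<Rightarrow> real^'d^'d"
  assumes f: "f \<in> Hr \<rho> r" and g: "g \<in> Hr \<rho> r" and inv: "invertible (B 0)" and mu: "opnorm_inf \<Lambda> ^ r \<le> \<mu>"
    and L1: "opnorm_inf \<Lambda> \<le> 1" and q: "(\<Sum>i=1..N. \<mu> ^ i * opnorm_inf (matrix_inv (B 0) ** B i)) < 1"
    and eq: "Lop \<rho> N B \<Lambda> f = Lop \<rho> N B \<Lambda> g"
  shows "f = g"
proof -
  define d where "d = (\<lambda>x. f x - g x)"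
  have dH: "d \<in> Hr \<rho> r" unfolding d_def by (rule Hr_diff[OF rho f g])
  have "Lop \<rho> N B \<Lambda> d = (\<lambda>x. 0)" unfolding d_def Lop_diff eq by simp
  then have "Hnorm \<rho> r d \<le> opnorm_inf (matrix_inv (B 0)) * Hnorm \<rho> r (\<lambda>x::real^'m. 0::real^'d)
      + (\<Sum>i=1..N. \<mu> ^ i * opnorm_inf (matrix_inv (B 0) ** B i)) * Hnorm \<rho> r d"
    using est2[where B=B and \<Lambda>=\<Lambda> and \<mu>=\<mu> and N=N, OF dH inv mu L1] by simp
  moreover have "opnorm_inf (matrix_inv (B 0)) * Hnorm \<rho> r (\<lambda>x::real^'m. 0::real^'d) \<le> 0"
    by (rule mult_nonneg_nonpos[OF opnorm_nonneg Hnorm_zero])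
  ultimately have "(1 - (\<Sum>i=1..N. \<mu> ^ i * opnorm_inf (matrix_inv (B 0) ** B i))) * Hnorm \<rho> r d \<le> 0"
    by (simp add: algebra_simps)
  then have h0: "Hnorm \<rho> r d \<le> 0" using q by (simp add: mult_le_0_iff)
  have "d = (\<lambda>x. 0)"
    by (rule zero_lemma[OF rho dH]) (use Hnorm_unit[OF rho dH] h0 in force)
  then show ?thesis unfolding d_def by (metis eq_iff_diff_eq_0 ext)
qed

end


lemma cauchy_bound:
  fixes X :: "nat \<Rightarrow> 'a::metric_space"
  assumes "\<And>n m. n \<le> m \<Longrightarrow> dist (X m) (X n) \<le> b n" "b \<longlonglongrightarrow> 0"
  shows "Cauchy X"
  unfolding Cauchy_def
proof (intro allI impI)
  fix e :: real assume e: "e > 0"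
  obtain N where N: "\<And>n. n \<ge> N \<Longrightarrow> norm (b n - 0) < e / 2" using LIMSEQ_D[OF assms(2), of "e/2"] e by auto
  show "\<exists>M. \<forall>m\<ge>M. \<forall>n\<ge>M. dist (X m) (X n) < e"
  proof (intro exI allI impI)
    fix m n assume m: "N \<le> m" and n: "N \<le> n"
    have "dist (X m) (X n) \<le> dist (X m) (X N) + dist (X n) (X N)" by (rule dist_triangle2)
    also have "\<dots> \<le> b N + b N" using assms(1)[OF m] assms(1)[OF n] by simp
    also have "\<dots> < e" using N[of N] by simp
    finally show "dist (X m) (X n) < e" .
  qed
qed

lemma lim_supn_bound:
  assumes "X \<longlonglongrightarrow> L" "\<And>m. n \<le> m \<Longrightarrow> supn (X m - y) \<le> B"
  shows "supn (L - y) \<le> B"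
  unfolding supn_le_iff
proof
  fix i
  have "(\<lambda>m. \<bar>(X m - y) $ i\<bar>) \<longlonglongrightarrow> \<bar>(L - y) $ i\<bar>"
    by (intro tendsto_intros tendsto_vec_nth assms(1))
  moreover have "\<exists>N. \<forall>m\<ge>N. \<bar>(X m - y) $ i\<bar> \<le> B"
    using assms(2) supn_ge order_trans by blast
  ultimately show "\<bar>(L - y) $ i\<bar> \<le> B" by (rule LIMSEQ_le_const2)
qed

context fixes \<rho> :: real assumes rho: "\<rho> > 0"
begin

lemma complete:
  fixes \<phi>s :: "nat \<Rightarrow> real^'m \<Rightarrow> real^'d" and e :: "nat \<Rightarrow> real"
  assumes H: "\<And>n. \<phi>s n \<in> Hr \<rho> r" and C: "\<And>n m. n \<le> m \<Longrightarrow> Hnorm \<rho> r (\<lambda>x. \<phi>s m x - \<phi>s n x) \<le> e n"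
    and e0: "e \<longlonglongrightarrow> 0"
  shows "\<exists>\<phi>\<in>Hr \<rho> r. \<forall>n. Hnorm \<rho> r (\<lambda>x. \<phi>s n x - \<phi> x) \<le> e n"
proof -
  define S where "S = (Dset \<rho> :: (real^'m) set)"
  have D0S: "0 \<in> S" unfolding S_def by (rule D0[OF rho])
  have cS: "convex S" unfolding S_def by (rule Dset_convex)
  define cc where "cc = real CARD('d) * real CARD('m) * \<rho>"
  have cc0: "0 \<le> cc" unfolding cc_def using rho by simp
  define P where "P k xi = (\<Prod>i<k. supn (xi i))" for k and xi :: "nat \<Rightarrow> real^'m"
  have Pnn: "0 \<le> P k xi" for k xi unfolding P_def by (simp add: prod_nonneg supn_nonneg)
  have sm: "smooth S r (\<phi>s n)" for n unfolding S_def by (rule Hr_smooth[OF rho H])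
  have enn: "0 \<le> e n" for n
    using Hnorm_nonneg[OF rho Hr_diff[OF rho H H, of n n]] C[of n n] by simp
  have U: "supn (dd S k (\<phi>s m) xi z - dd S k (\<phi>s n) xi z) \<le> cc ^ (r - k) * e n * P k xi"
    if nm: "n \<le> m" and k: "k \<le> r" and z: "z \<in> S" for n m k z xi
  proof -
    define \<delta> where "\<delta> = (\<lambda>x. \<phi>s m x - \<phi>s n x)"
    have dH: "\<delta> \<in> Hr \<rho> r" unfolding \<delta>_def by (rule Hr_diff[OF rho H H])
    have E: "\<And>z xi. z \<in> Dset \<rho> \<Longrightarrow> \<forall>i<r. supn (xi i) = 1 \<Longrightarrow> supn (dd (Dset \<rho>) r \<delta> xi z) \<le> e n"
      using Hnorm_unit[OF rho dH] C[OF nm] unfolding \<delta>_def by (meson order_trans)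
    have "mlnorm k (\<lambda>xi. dd S k \<delta> xi z) \<le> cc ^ (r - k) * e n"
      unfolding cc_def S_def
      by (rule mlnorm_le, rule descent[OF rho Hr_smooth[OF rho dH] Hr_zero_at0[OF rho dH] E k])
        (use z S_def in auto)
    moreover have "supn (dd S k \<delta> xi z) \<le> mlnorm k (\<lambda>xi. dd S k \<delta> xi z) * P k xi"
      unfolding P_def S_def by (rule ml_prod[OF Hr_ml[OF rho dH k]]) (use z S_def in simp)
    ultimately have "supn (dd S k \<delta> xi z) \<le> cc ^ (r - k) * e n * P k xi"
      using Pnn by (meson mult_right_mono order_trans)
    moreover have "dd S k \<delta> xi z = dd S k (\<phi>s m) xi z - dd S k (\<phi>s n) xi z"
      unfolding \<delta>_def S_def by (rule dd_diff(2)[OF rho Hr_smooth[OF rho H] Hr_smooth[OF rho H] k]) (use z S_def in simp)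
    ultimately show ?thesis by simp
  qed
  have conv: "convergent (\<lambda>n. dd S k (\<phi>s n) xi z)" if k: "k \<le> r" and z: "z \<in> S" for k z xi
  proof -
    have "Cauchy (\<lambda>n. dd S k (\<phi>s n) xi z)"
    proof (rule cauchy_bound)
      fix n m :: nat assume "n \<le> m"
      have "dist (dd S k (\<phi>s m) xi z) (dd S k (\<phi>s n) xi z) \<le> real CARD('d) * supn (dd S k (\<phi>s m) xi z - dd S k (\<phi>s n) xi z)"
        unfolding dist_norm by (rule norm_le_supn)
      also have "\<dots> \<le> real CARD('d) * (cc ^ (r - k) * e n * P k xi)"
        by (rule mult_left_mono[OF U[OF \<open>n \<le> m\<close> k z]]) simp
      finally show "dist (dd S k (\<phi>s m) xi z) (dd S k (\<phi>s n) xi z) \<le> real CARD('d) * (cc ^ (r - k) * e n * P k xi)" .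
    next
      show "(\<lambda>n. real CARD('d) * (cc ^ (r - k) * e n * P k xi)) \<longlonglongrightarrow> 0"
        using tendsto_mult_left[OF tendsto_mult_right[OF tendsto_mult_left[OF e0]]] by simp
    qed
    then show ?thesis by (simp add: convergent_eq_Cauchy[symmetric] convergent_def)
  qed
  define G where "G k xi z = lim (\<lambda>n. dd S k (\<phi>s n) xi z)" for k xi z
  have GL: "(\<lambda>n. dd S k (\<phi>s n) xi z) \<longlonglongrightarrow> G k xi z" if "k \<le> r" "z \<in> S" for k xi z
    unfolding G_def using conv[OF that] by (simp add: convergent_LIMSEQ_iff)
  have GU: "supn (G k xi z - dd S k (\<phi>s n) xi z) \<le> cc ^ (r - k) * e n * P k xi" if "k \<le> r" "z \<in> S" for k xi z n
    by (rule lim_supn_bound[OF GL[OF that]]) (rule U[OF _ that])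
  define \<phi> where "\<phi> y = (if y \<in> S then G 0 (\<lambda>_. 0) y else 0)" for y
  have claim: "k \<le> r \<Longrightarrow> smooth S k \<phi> \<and> (\<forall>xi. \<forall>z\<in>S. dd S k \<phi> xi z = G k xi z)" for k
  proof (induction k)
    case 0
    have g0: "G 0 xi z = G 0 (\<lambda>_. 0) z" for xi z unfolding G_def by simp
    show ?case
    proof (intro conjI allI ballI)
      show "smooth S 0 \<phi>" by (simp add: smooth_def)
      fix xi z assume "z \<in> S"
      then show "dd S 0 \<phi> xi z = G 0 xi z" by (simp add: \<phi>_def g0[of xi z])
    qed
  next
    case (Suc k)
    then have kr: "k < r" by simp
    have IHs: "smooth S k \<phi>" and IHd: "\<And>xi z. z \<in> S \<Longrightarrow> dd S k \<phi> xi z = G k xi z"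
      using Suc by auto
    have der: "(dd S k \<phi> xi has_derivative (\<lambda>h. G (Suc k) (xi(k := h)) z)) (at z within S)"
      if z: "z \<in> S" for xi z
    proof -
      define f where "f n = (\<lambda>w. dd S k (\<phi>s n) xi w)" for n
      define f' where "f' n w = frechet_derivative (f n) (at w within S)" for n w
      define g' where "g' w h = G (Suc k) (xi(k := h)) w" for w h
      have fd: "(f n has_derivative f' n w) (at w within S)" if "w \<in> S" for n w
        unfolding f'_def f_def using smoothD[OF sm kr that] frechet_derivative_works by blast
      have f'eq: "f' n w h = dd S (Suc k) (\<phi>s n) (xi(k := h)) w" for n w h
      proof -
        have "dd S k (\<phi>s n) (xi(k := h)) = dd S k (\<phi>s n) xi" by (rule dd_slot) simp
        then show ?thesis unfolding f'_def f_def by simp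
      qed
      define K where "K = real CARD('d) * cc ^ (r - Suc k) * P k xi"
      have K0: "0 \<le> K" unfolding K_def using cc0 Pnn by simp
      have unif: "\<forall>\<^sub>F n in sequentially. \<forall>w\<in>S. \<forall>h. norm (f' n w h - g' w h) \<le> \<epsilon> * norm h"
        if eps: "\<epsilon> > 0" for \<epsilon>
      proof -
        have "\<forall>\<^sub>F n in sequentially. e n < \<epsilon> / (K + 1)"
          using order_tendstoD(2)[OF e0] eps K0 by simp
        then show ?thesis
        proof (rule eventually_mono)
          fix n assume en: "e n < \<epsilon> / (K + 1)"
          have Ke: "K * e n \<le> \<epsilon>"
          proof -
            have "K * e n \<le> (K + 1) * e n" using enn[of n] by (simp add: algebra_simps)
            also have "\<dots> \<le> \<epsilon>" using en K0 by (simp add: field_simps)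
            finally show ?thesis .
          qed
          show "\<forall>w\<in>S. \<forall>h. norm (f' n w h - g' w h) \<le> \<epsilon> * norm h"
          proof (intro ballI allI)
            fix w h assume w: "w \<in> S"
            have Pk: "P (Suc k) (xi(k := h)) = P k xi * supn h" unfolding P_def by simp
            have "norm (f' n w h - g' w h) = norm (g' w h - f' n w h)" by (rule norm_minus_commute)
            also have "\<dots> \<le> real CARD('d) * supn (g' w h - f' n w h)" by (rule norm_le_supn)
            also have "\<dots> \<le> real CARD('d) * (cc ^ (r - Suc k) * e n * P (Suc k) (xi(k := h)))"
              unfolding g'_def f'eq by (rule mult_left_mono[OF GU]) (use Suc.prems w in auto)
            also have "\<dots> = K * e n * supn h" unfolding Pk K_def by (simp add: algebra_simps)
            also have "\<dots> \<le> \<epsilon> * norm h"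
              using Ke supn_le_norm[of h] supn_nonneg[of h] K0 enn[of n]
              by (meson mult_mono mult_nonneg_nonneg order_trans eps less_imp_le)
            finally show "norm (f' n w h - g' w h) \<le> \<epsilon> * norm h" .
          qed
        qed
      qed
      have lim0: "(\<lambda>n. f n 0) \<longlonglongrightarrow> G k xi 0" unfolding f_def by (rule GL) (use kr D0S in auto)
      obtain g where g: "\<And>w. w \<in> S \<Longrightarrow> (\<lambda>n. f n w) \<longlonglongrightarrow> g w \<and> (g has_derivative g' w) (at w within S)"
        using has_derivative_sequence[OF cS fd unif D0S lim0] by blast
      have gG: "g w = dd S k \<phi> xi w" if "w \<in> S" for w
      proof -
        have "(\<lambda>n. f n w) \<longlonglongrightarrow> G k xi w" unfolding f_def by (rule GL) (use kr that in auto)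
        then show ?thesis using LIMSEQ_unique[OF conjunct1[OF g[OF that]]] IHd[OF that] by simp
      qed
      have "(g has_derivative g' z) (at z within S)" using g[OF z] by blast
      then show ?thesis unfolding g'_def using hd_cong[OF z gG] by simp
    qed
    have smS: "smooth S (Suc k) \<phi>"
      unfolding smooth_def
    proof (intro allI impI ballI)
      fix j xi z assume j: "j < Suc k" and z: "z \<in> S"
      show "(\<lambda>y. dd S j \<phi> xi y) differentiable (at z within S)"
      proof (cases "j < k")
        case True then show ?thesis using smoothD[OF IHs True z] by simp
      next
        case False then have "j = k" using j by simp
        then show ?thesis using der[OF z] unfolding differentiable_def by blast
      qed
    qed
    have "dd S (Suc k) \<phi> xi z = G (Suc k) xi z" if z: "z \<in> S" for xi z
    proof -
      have "frechet_derivative (dd S k \<phi> xi) (at z within S) = (\<lambda>h. G (Suc k) (xi(k := h)) z)"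
        unfolding S_def by (rule fd_unique[OF rho _ der[unfolded S_def]]) (use z S_def in auto)
      then show ?thesis by simp
    qed
    then show ?case using smS by blast
  qed
  have smr: "smooth S r \<phi>" and ddG: "\<And>xi z. z \<in> S \<Longrightarrow> dd S r \<phi> xi z = G r xi z"
    using claim[of r] by auto
  have Ur: "supn (dd S r (\<phi>s n) xi z - dd S r \<phi> xi z) \<le> e n"
    if z: "z \<in> S" and xi: "\<forall>i<r. supn (xi i) = 1" for n z xi
  proof -
    have "P r xi = 1" unfolding P_def using xi by simp
    then show ?thesis using GU[of r z xi n] z ddG[OF z] by (simp add: supn_minus_comm)
  qed
  have mlp: "ml r (\<lambda>xi. dd S r \<phi> xi y - dd S r \<phi> xi x)" if "x \<in> S" "y \<in> S" for x y
    unfolding S_def by (rule ml_diff; rule dd_ml[OF rho smr[unfolded S_def] order_refl]) (use that S_def in auto)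
  have mln: "ml r (\<lambda>xi. dd S r (\<phi>s n) xi y - dd S r (\<phi>s n) xi x)" if "x \<in> S" "y \<in> S" for x y n
    unfolding S_def by (rule ml_diff; rule Hr_ml[OF rho H order_refl]) (use that S_def in auto)
  have cont: "((\<lambda>y. mlnorm r (\<lambda>xi. dd S r \<phi> xi y - dd S r \<phi> xi x)) \<longlongrightarrow> 0) (at x within S)"
    if x: "x \<in> S" for x
    unfolding tendsto_iff
  proof (intro allI impI)
    fix \<epsilon> :: real assume eps: "\<epsilon> > 0"
    obtain n where n: "e n < \<epsilon> / 4"
      using order_tendstoD(2)[OF e0, of "\<epsilon>/4"] eps eventually_sequentially by auto
    have ev1: "\<forall>\<^sub>F y in at x within S. dist (mlnorm r (\<lambda>xi. dd S r (\<phi>s n) xi y - dd S r (\<phi>s n) xi x)) 0 < \<epsilon> / 4"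
      unfolding S_def by (rule tendstoD[OF Hr_cont[OF rho H x[unfolded S_def]]]) (use eps in simp)
    have evS: "\<forall>\<^sub>F y in at x within S. y \<in> S" unfolding eventually_at_filter by simp
    show "\<forall>\<^sub>F y in at x within S. dist (mlnorm r (\<lambda>xi. dd S r \<phi> xi y - dd S r \<phi> xi x)) 0 < \<epsilon>"
      using ev1 evS
    proof (eventually_elim)
      case (elim y)
      then have y: "y \<in> S" and m: "mlnorm r (\<lambda>xi. dd S r (\<phi>s n) xi y - dd S r (\<phi>s n) xi x) < \<epsilon> / 4"
        by auto
      have "mlnorm r (\<lambda>xi. dd S r \<phi> xi y - dd S r \<phi> xi x) \<le> e n + mlnorm r (\<lambda>xi. dd S r (\<phi>s n) xi y - dd S r (\<phi>s n) xi x) + e n"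
      proof (rule mlnorm_le)
        fix xi :: "nat \<Rightarrow> real^'m" assume xi: "\<forall>i<r. supn (xi i) = 1"
        define A where "A = dd S r \<phi> xi y - dd S r (\<phi>s n) xi y"
        define Bv where "Bv = dd S r (\<phi>s n) xi y - dd S r (\<phi>s n) xi x"
        define Cv where "Cv = dd S r (\<phi>s n) xi x - dd S r \<phi> xi x"
        have eq: "dd S r \<phi> xi y - dd S r \<phi> xi x = A + (Bv + Cv)" unfolding A_def Bv_def Cv_def by simp
        have s1: "supn (dd S r \<phi> xi y - dd S r \<phi> xi x) \<le> supn A + supn (Bv + Cv)" unfolding eq by (rule supn_add)
        have s2: "supn (Bv + Cv) \<le> supn Bv + supn Cv" by (rule supn_add)
        have "supn (dd S r \<phi> xi y - dd S r \<phi> xi x) \<le> supn (dd S r \<phi> xi y - dd S r (\<phi>s n) xi y)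
           + (supn (dd S r (\<phi>s n) xi y - dd S r (\<phi>s n) xi x) + supn (dd S r (\<phi>s n) xi x - dd S r \<phi> xi x))"
          using s1 s2 unfolding A_def Bv_def Cv_def by linarith
        also have "\<dots> \<le> e n + (mlnorm r (\<lambda>xi. dd S r (\<phi>s n) xi y - dd S r (\<phi>s n) xi x) + e n)"
        proof -
          have u1: "supn (dd S r \<phi> xi y - dd S r (\<phi>s n) xi y) \<le> e n"
            by (subst supn_minus_comm) (rule Ur[OF y xi])
          have u3: "supn (dd S r (\<phi>s n) xi x - dd S r \<phi> xi x) \<le> e n" by (rule Ur[OF x xi])
          have u2: "supn (dd S r (\<phi>s n) xi y - dd S r (\<phi>s n) xi x) \<le> mlnorm r (\<lambda>xi. dd S r (\<phi>s n) xi y - dd S r (\<phi>s n) xi x)"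
            by (rule ml_unit[OF mln[OF x y] xi])
          from u1 u2 u3 show ?thesis by linarith
        qed
        finally show "supn (dd S r \<phi> xi y - dd S r \<phi> xi x) \<le> e n + mlnorm r (\<lambda>xi. dd S r (\<phi>s n) xi y - dd S r (\<phi>s n) xi x) + e n"
          by simp
      qed
      moreover have "0 \<le> mlnorm r (\<lambda>xi. dd S r \<phi> xi y - dd S r \<phi> xi x)"
        by (rule mlnorm_nonneg[OF mlp[OF x y]])
      ultimately show ?case using m n by simp
    qed
  qed
  have z0: "dd S k \<phi> xi 0 = 0" if k: "k < r" for k xi
  proof -
    have "(\<lambda>n. dd S k (\<phi>s n) xi 0) \<longlonglongrightarrow> G k xi 0" by (rule GL) (use k D0S in auto)
    moreover have "(\<lambda>n. dd S k (\<phi>s n) xi 0) = (\<lambda>n. 0)"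
      unfolding S_def using Hr_zero_at0[OF rho H k] by simp
    ultimately have "G k xi 0 = 0" using LIMSEQ_unique[OF _ tendsto_const] by simp
    then show ?thesis using claim[of k] k D0S by auto
  qed
  have PH: "\<phi> \<in> Hr \<rho> r"
    unfolding Hr_def Cr_on_def mem_Collect_eq S_def[symmetric]
  proof (intro conjI)
    show "\<forall>k<r. \<forall>xi. \<forall>x\<in>S. (\<lambda>y. dd S k \<phi> xi y) differentiable (at x within S)"
      using smr unfolding smooth_def by blast
    show "\<forall>x\<in>S. ((\<lambda>y. mlnorm r (\<lambda>xi. dd S r \<phi> xi y - dd S r \<phi> xi x)) \<longlongrightarrow> 0) (at x within S)"
      using cont by blast
    show "\<forall>x. x \<notin> S \<longrightarrow> \<phi> x = 0" unfolding \<phi>_def by simp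
    show "\<forall>i<r. \<forall>xi. dd S i \<phi> xi 0 = 0" using z0 by blast
  qed
  have "Hnorm \<rho> r (\<lambda>x. \<phi>s n x - \<phi> x) \<le> e n" for n
  proof (rule Hnorm_le[OF rho])
    fix z :: "real^'m" and xi :: "nat \<Rightarrow> real^'m" assume z: "z \<in> Dset \<rho>" and xi: "\<forall>i<r. supn (xi i) = 1"
    have "dd (Dset \<rho>) r (\<lambda>x. \<phi>s n x - \<phi> x) xi z = dd S r (\<phi>s n) xi z - dd S r \<phi> xi z"
      unfolding S_def by (rule dd_diff(2)[OF rho Hr_smooth[OF rho H] smr[unfolded S_def] order_refl z])
    then show "supn (dd (Dset \<rho>) r (\<lambda>x. \<phi>s n x - \<phi> x) xi z) \<le> e n"
      using Ur[OF z[folded S_def] xi] by simp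
  qed
  then show ?thesis using PH by blast
qed

end


lemma matrix_inv_right: "invertible A \<Longrightarrow> A ** matrix_inv A = mat 1"
  unfolding invertible_def matrix_inv_def by (metis (mono_tags, lifting) someI_ex)

context fixes \<rho> :: real assumes rho: "\<rho> > 0"
begin

lemma Hnorm_swap:
  fixes f g :: "real^'m \<Rightarrow> real^'d"
  assumes f: "f \<in> Hr \<rho> r" and g: "g \<in> Hr \<rho> r"
  shows "Hnorm \<rho> r (\<lambda>x. f x - g x) = Hnorm \<rho> r (\<lambda>x. g x - f x)"
  unfolding Hnorm_def
proof (rule SUP_cong[OF refl])
  fix x :: "real^'m" assume x: "x \<in> Dset \<rho>"
  have "(\<lambda>xi. dd (Dset \<rho>) r (\<lambda>x. f x - g x) xi x) = (\<lambda>xi. dd (Dset \<rho>) r f xi x - dd (Dset \<rho>) r g xi x)"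
    using dd_diff(2)[OF rho Hr_smooth[OF rho f] Hr_smooth[OF rho g] order_refl x] by simp
  moreover have "(\<lambda>xi. dd (Dset \<rho>) r (\<lambda>x. g x - f x) xi x) = (\<lambda>xi. dd (Dset \<rho>) r g xi x - dd (Dset \<rho>) r f xi x)"
    using dd_diff(2)[OF rho Hr_smooth[OF rho g] Hr_smooth[OF rho f] order_refl x] by simp
  ultimately show "mlnorm r (\<lambda>xi. dd (Dset \<rho>) r (\<lambda>x. f x - g x) xi x) = mlnorm r (\<lambda>xi. dd (Dset \<rho>) r (\<lambda>x. g x - f x) xi x)"
    using mlnorm_swap[of r "\<lambda>xi. dd (Dset \<rho>) r f xi x" "\<lambda>xi. dd (Dset \<rho>) r g xi x"] by simp
qed

lemma Hnorm_tri:
  fixes f g h :: "real^'m \<Rightarrow> real^'d"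
  assumes f: "f \<in> Hr \<rho> r" and g: "g \<in> Hr \<rho> r" and h: "h \<in> Hr \<rho> r"
  shows "Hnorm \<rho> r (\<lambda>x. f x - h x) \<le> Hnorm \<rho> r (\<lambda>x. f x - g x) + Hnorm \<rho> r (\<lambda>x. g x - h x)"
proof (rule Hnorm_le[OF rho])
  fix x :: "real^'m" and xi :: "nat \<Rightarrow> real^'m" assume x: "x \<in> Dset \<rho>" and xi: "\<forall>i<r. supn (xi i) = 1"
  have e: "dd (Dset \<rho>) r (\<lambda>x. a x - b x) xi x = dd (Dset \<rho>) r a xi x - dd (Dset \<rho>) r b xi x"
    if "a \<in> Hr \<rho> r" "b \<in> Hr \<rho> r" for a b :: "real^'m \<Rightarrow> real^'d"
    by (rule dd_diff(2)[OF rho Hr_smooth[OF rho that(1)] Hr_smooth[OF rho that(2)] order_refl x])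
  have "supn (dd (Dset \<rho>) r (\<lambda>x. f x - h x) xi x) \<le> supn (dd (Dset \<rho>) r (\<lambda>x. f x - g x) xi x) + supn (dd (Dset \<rho>) r (\<lambda>x. g x - h x) xi x)"
    unfolding e[OF f h] e[OF f g] e[OF g h] using supn_add[of "dd (Dset \<rho>) r f xi x - dd (Dset \<rho>) r g xi x" "dd (Dset \<rho>) r g xi x - dd (Dset \<rho>) r h xi x"]
    by simp
  also have "\<dots> \<le> Hnorm \<rho> r (\<lambda>x. f x - g x) + Hnorm \<rho> r (\<lambda>x. g x - h x)"
    by (intro add_mono Hnorm_unit[OF rho Hr_diff[OF rho] x xi] f g h)
  finally show "supn (dd (Dset \<rho>) r (\<lambda>x. f x - h x) xi x) \<le> Hnorm \<rho> r (\<lambda>x. f x - g x) + Hnorm \<rho> r (\<lambda>x. g x - h x)" .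
qed

lemma contr:
  fixes \<delta> :: "real^'m \<Rightarrow> real^'d" and B :: "nat \<Rightarrow> real^'d^'d"
  assumes P: "\<delta> \<in> Hr \<rho> r" and inv: "invertible (B 0)" and mu: "opnorm_inf \<Lambda> ^ r \<le> \<mu>"
    and L1: "opnorm_inf \<Lambda> \<le> 1"
  shows "Hnorm \<rho> r (\<lambda>x. \<delta> x - matrix_inv (B 0) *v Lop \<rho> N B \<Lambda> \<delta> x)
     \<le> (\<Sum>i=1..N. \<mu> ^ i * opnorm_inf (matrix_inv (B 0) ** B i)) * Hnorm \<rho> r \<delta>"
proof (rule Hnorm_le[OF rho])
  fix x :: "real^'m" and xi :: "nat \<Rightarrow> real^'m" assume x: "x \<in> Dset \<rho>" and xi: "\<forall>i<r. supn (xi i) = 1"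
  have LH: "Lop \<rho> N B \<Lambda> \<delta> \<in> Hr \<rho> r" by (rule Hr_Lop[OF rho P L1])
  have MH: "(\<lambda>x. matrix_inv (B 0) *v Lop \<rho> N B \<Lambda> \<delta> x) \<in> Hr \<rho> r" by (rule Hr_mat[OF rho LH])
  have bl: "bounded_linear (\<lambda>v::real^'d. matrix_inv (B 0) *v v)" using linear_conv_bounded_linear by auto
  have "dd (Dset \<rho>) r (\<lambda>x. \<delta> x - matrix_inv (B 0) *v Lop \<rho> N B \<Lambda> \<delta> x) xi x
      = dd (Dset \<rho>) r \<delta> xi x - dd (Dset \<rho>) r (\<lambda>x. matrix_inv (B 0) *v Lop \<rho> N B \<Lambda> \<delta> x) xi x"
    by (rule dd_diff(2)[OF rho Hr_smooth[OF rho P] Hr_smooth[OF rho MH] order_refl x])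
  also have "dd (Dset \<rho>) r (\<lambda>x. matrix_inv (B 0) *v Lop \<rho> N B \<Lambda> \<delta> x) xi x = matrix_inv (B 0) *v dd (Dset \<rho>) r (Lop \<rho> N B \<Lambda> \<delta>) xi x"
    by (rule dd_lin[OF rho Hr_smooth[OF rho LH] bl order_refl x])
  finally show "supn (dd (Dset \<rho>) r (\<lambda>x. \<delta> x - matrix_inv (B 0) *v Lop \<rho> N B \<Lambda> \<delta> x) xi x)
     \<le> (\<Sum>i=1..N. \<mu> ^ i * opnorm_inf (matrix_inv (B 0) ** B i)) * Hnorm \<rho> r \<delta>"
    using est[where B=B, OF rho P inv mu L1 x xi] by simp
qed

lemma surj:
  fixes \<psi> :: "real^'m \<Rightarrow> real^'d" and B :: "nat \<Rightarrow> real^'d^'d"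
  assumes psi: "\<psi> \<in> Hr \<rho> r" and inv: "invertible (B 0)" and mu: "opnorm_inf \<Lambda> ^ r \<le> \<mu>"
    and L1: "opnorm_inf \<Lambda> \<le> 1" and q1: "(\<Sum>i=1..N. \<mu> ^ i * opnorm_inf (matrix_inv (B 0) ** B i)) < 1"
    and mu0: "0 \<le> \<mu>"
  shows "\<exists>\<phi>\<in>Hr \<rho> r. Lop \<rho> N B \<Lambda> \<phi> = \<psi>"
proof -
  define q where "q = (\<Sum>i=1..N. \<mu> ^ i * opnorm_inf (matrix_inv (B 0) ** B i))"
  have q0: "0 \<le> q" unfolding q_def by (intro sum_nonneg mult_nonneg_nonneg zero_le_power mu0 opnorm_nonneg)
  have q1': "q < 1" using q1 unfolding q_def .
  define Mi where "Mi = matrix_inv (B 0)"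
  define F where "F \<phi> = (\<lambda>x. \<phi> x - Mi *v (Lop \<rho> N B \<Lambda> \<phi> x - \<psi> x))" for \<phi> :: "real^'m \<Rightarrow> real^'d"
  define \<phi>s where "\<phi>s n = (F ^^ n) (\<lambda>x. \<psi> x - \<psi> x)" for n
  have FH: "F \<phi> \<in> Hr \<rho> r" if "\<phi> \<in> Hr \<rho> r" for \<phi>
    unfolding F_def by (intro Hr_diff[OF rho] Hr_mat[OF rho] Hr_Lop[OF rho] that psi L1)
  have sH: "\<phi>s n \<in> Hr \<rho> r" for n
  proof (induction n)
    case 0 show ?case unfolding \<phi>s_def funpow_0 by (rule Hr_diff[OF rho psi psi])
  next
    case (Suc n) show ?case unfolding \<phi>s_def funpow.simps o_def by (rule FH[OF Suc[unfolded \<phi>s_def]])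
  qed
  have sS: "\<phi>s (Suc n) = F (\<phi>s n)" for n by (simp add: \<phi>s_def)
  have Fd: "(\<lambda>x. F a x - F b x) = (\<lambda>x. (\<lambda>x. a x - b x) x - Mi *v Lop \<rho> N B \<Lambda> (\<lambda>x. a x - b x) x)" for a b
    unfolding F_def Lop_diff by (rule ext) (simp add: matrix_vector_mult_diff_distrib algebra_simps)
  have FC: "Hnorm \<rho> r (\<lambda>x. F a x - F b x) \<le> q * Hnorm \<rho> r (\<lambda>x. a x - b x)"
    if "a \<in> Hr \<rho> r" "b \<in> Hr \<rho> r" for a b
    unfolding Fd q_def Mi_def by (rule contr[where B=B and N=N, OF Hr_diff[OF rho that] inv mu L1])
  define H1 where "H1 = Hnorm \<rho> r (\<lambda>x. \<phi>s 1 x - \<phi>s 0 x)"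
  have H1nn: "0 \<le> H1" unfolding H1_def by (rule Hnorm_nonneg[OF rho Hr_diff[OF rho sH sH]])
  have step: "Hnorm \<rho> r (\<lambda>x. \<phi>s (Suc n) x - \<phi>s n x) \<le> q ^ n * H1" for n
  proof (induction n)
    case 0 then show ?case by (simp add: H1_def)
  next
    case (Suc n)
    have "Hnorm \<rho> r (\<lambda>x. \<phi>s (Suc (Suc n)) x - \<phi>s (Suc n) x) \<le> q * Hnorm \<rho> r (\<lambda>x. \<phi>s (Suc n) x - \<phi>s n x)"
      unfolding sS[of "Suc n"] sS[of n] by (rule FC[OF FH[OF sH] sH])
    also have "\<dots> \<le> q * (q ^ n * H1)" by (rule mult_left_mono[OF Suc q0])
    finally show ?case by simp
  qed
  have cb: "Hnorm \<rho> r (\<lambda>x. \<phi>s (n + p) x - \<phi>s n x) \<le> (q ^ n - q ^ (n + p)) / (1 - q) * H1" for n p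
  proof (induction p)
    case 0
    have "Hnorm \<rho> r (\<lambda>x. \<phi>s n x - \<phi>s n x) \<le> 0" using Hnorm_zero[OF rho] by simp
    then show ?case by simp
  next
    case (Suc p)
    have "Hnorm \<rho> r (\<lambda>x. \<phi>s (n + Suc p) x - \<phi>s n x)
       \<le> Hnorm \<rho> r (\<lambda>x. \<phi>s (Suc (n + p)) x - \<phi>s (n + p) x) + Hnorm \<rho> r (\<lambda>x. \<phi>s (n + p) x - \<phi>s n x)"
      using Hnorm_tri[where f="\<phi>s (Suc (n + p))" and g="\<phi>s (n + p)" and h="\<phi>s n", OF sH sH sH] by simp
    also have "\<dots> \<le> q ^ (n + p) * H1 + (q ^ n - q ^ (n + p)) / (1 - q) * H1"
      by (rule add_mono[OF step Suc])
    also have "\<dots> = (q ^ n - q ^ (n + Suc p)) / (1 - q) * H1"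
      using q1' by (simp add: field_simps)
    finally show ?case .
  qed
  define e where "e n = q ^ n / (1 - q) * H1" for n
  have C: "Hnorm \<rho> r (\<lambda>x. \<phi>s m x - \<phi>s n x) \<le> e n" if nm: "n \<le> m" for n m
  proof -
    obtain p where m: "m = n + p" using le_Suc_ex[OF nm] by blast
    have "(q ^ n - q ^ (n + p)) / (1 - q) * H1 \<le> q ^ n / (1 - q) * H1"
      using q1' q0 H1nn by (intro mult_right_mono divide_right_mono) auto
    then show ?thesis using cb[of n p] unfolding m e_def by linarith
  qed
  have e0: "e \<longlonglongrightarrow> 0"
  proof -
    have "(\<lambda>n. q ^ n) \<longlonglongrightarrow> 0" using q0 q1' by (intro LIMSEQ_power_zero) simp
    then have "(\<lambda>n. q ^ n * (H1 / (1 - q))) \<longlonglongrightarrow> 0" by (rule tendsto_mult_left_zero)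
    moreover have "e = (\<lambda>n. q ^ n * (H1 / (1 - q)))" unfolding e_def by (rule ext) simp
    ultimately show ?thesis by simp
  qed
  obtain \<phi> where PH: "\<phi> \<in> Hr \<rho> r" and Pb: "\<And>n. Hnorm \<rho> r (\<lambda>x. \<phi>s n x - \<phi> x) \<le> e n"
    using complete[OF rho sH C e0] by blast
  have FPH: "F \<phi> \<in> Hr \<rho> r" by (rule FH[OF PH])
  have bnd: "Hnorm \<rho> r (\<lambda>x. F \<phi> x - \<phi> x) \<le> q * e n + e (Suc n)" for n
  proof -
    have "Hnorm \<rho> r (\<lambda>x. F \<phi> x - \<phi> x) \<le> Hnorm \<rho> r (\<lambda>x. F \<phi> x - F (\<phi>s n) x) + Hnorm \<rho> r (\<lambda>x. F (\<phi>s n) x - \<phi> x)"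
      by (rule Hnorm_tri[OF FPH FH[OF sH] PH])
    also have "Hnorm \<rho> r (\<lambda>x. F \<phi> x - F (\<phi>s n) x) \<le> q * Hnorm \<rho> r (\<lambda>x. \<phi> x - \<phi>s n x)"
      by (rule FC[OF PH sH])
    also have "Hnorm \<rho> r (\<lambda>x. \<phi> x - \<phi>s n x) = Hnorm \<rho> r (\<lambda>x. \<phi>s n x - \<phi> x)"
      by (rule Hnorm_swap[OF PH sH])
    also have "F (\<phi>s n) = \<phi>s (Suc n)" by (simp add: sS)
    finally show ?thesis using mult_left_mono[OF Pb q0, of n] Pb[of "Suc n"] by linarith
  qed
  have h0: "Hnorm \<rho> r (\<lambda>x. F \<phi> x - \<phi> x) \<le> 0"
  proof (rule LIMSEQ_le_const)
    show "(\<lambda>n. q * e n + e (Suc n)) \<longlonglongrightarrow> 0"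
      using tendsto_add[OF tendsto_mult_right_zero[OF e0, of q] LIMSEQ_Suc[OF e0]] by simp
    show "\<exists>N. \<forall>n\<ge>N. Hnorm \<rho> r (\<lambda>x. F \<phi> x - \<phi> x) \<le> q * e n + e (Suc n)" using bnd by blast
  qed
  have zf: "(\<lambda>x. F \<phi> x - \<phi> x) = (\<lambda>x. 0)"
  proof (rule zero_lemma[OF rho Hr_diff[OF rho FPH PH]])
    fix z :: "real^'m" and xi :: "nat \<Rightarrow> real^'m" assume "z \<in> Dset \<rho>" "\<forall>i<r. supn (xi i) = 1"
    then show "supn (dd (Dset \<rho>) r (\<lambda>x. F \<phi> x - \<phi> x) xi z) \<le> 0"
      using Hnorm_unit[OF rho Hr_diff[OF rho FPH PH]] h0 by (meson order_trans)
  qed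
  have z: "Mi *v (Lop \<rho> N B \<Lambda> \<phi> x - \<psi> x) = 0" for x
  proof -
    have "F \<phi> x - \<phi> x = 0" using fun_cong[OF zf, of x] by simp
    then show ?thesis unfolding F_def by simp
  qed
  have "Lop \<rho> N B \<Lambda> \<phi> = \<psi>"
  proof
    fix x
    have "Lop \<rho> N B \<Lambda> \<phi> x - \<psi> x = B 0 *v (Mi *v (Lop \<rho> N B \<Lambda> \<phi> x - \<psi> x))"
      unfolding Mi_def matrix_vector_mul_assoc matrix_inv_right[OF inv] by simp
    then show "Lop \<rho> N B \<Lambda> \<phi> x = \<psi> x" using z[of x] by simp
  qed
  then show ?thesis using PH by blast
qed

end

theorem mainTheorem13:
  fixes \<rho> \<mu> :: real and r N :: nat
    and B :: "nat \<Rightarrow> real^'d^'d" and \<Lambda> :: "real^'m^'m"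
  assumes "\<rho> > 0" and "r \<ge> 1" and "invertible (B 0)"
    and "opnorm_inf \<Lambda> ^ r \<le> \<mu>" and "\<mu> < 1"
    and "(\<Sum>i=1..N. \<mu> ^ i * opnorm_inf (matrix_inv (B 0) ** B i)) < 1"
  shows "(\<forall>\<phi>\<in>Hr \<rho> r. Lop \<rho> N B \<Lambda> \<phi> \<in> Hr \<rho> r)
    \<and> bij_betw (Lop \<rho> N B \<Lambda>) (Hr \<rho> r) (Hr \<rho> r)
    \<and> (\<exists>C. \<forall>\<psi>\<in>Hr \<rho> r.
          Hnorm \<rho> r (inv_into (Hr \<rho> r) (Lop \<rho> N B \<Lambda>) \<psi>) \<le> C * Hnorm \<rho> r \<psi>)"
proof -
  note rho = assms(1) and inv = assms(3) and mu = assms(4)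
  define q where "q = (\<Sum>i=1..N. \<mu> ^ i * opnorm_inf (matrix_inv (B 0) ** B i))"
  have L1: "opnorm_inf \<Lambda> \<le> 1"
  proof (rule ccontr)
    assume "\<not> opnorm_inf \<Lambda> \<le> 1"
    then have "1 < opnorm_inf \<Lambda> ^ r" using assms(2) by (intro one_less_power) auto
    then show False using assms(4,5) by simp
  qed
  have mu0: "0 \<le> \<mu>" using mu zero_le_power[OF opnorm_nonneg, of \<Lambda> r] by linarith
  have q1: "q < 1" using assms(6) unfolding q_def .
  have q0: "0 \<le> q" unfolding q_def by (intro sum_nonneg mult_nonneg_nonneg zero_le_power mu0 opnorm_nonneg)
  have c1: "\<forall>\<phi>\<in>Hr \<rho> r. Lop \<rho> N B \<Lambda> \<phi> \<in> Hr \<rho> r" using Hr_Lop[OF rho _ L1] by blast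
  have inj: "inj_on (Lop \<rho> N B \<Lambda>) (Hr \<rho> r)"
    unfolding inj_on_def using Lop_inj[where B=B, OF rho _ _ inv mu L1 assms(6)] by blast
  have im: "Lop \<rho> N B \<Lambda> ` Hr \<rho> r = Hr \<rho> r"
  proof
    show "Lop \<rho> N B \<Lambda> ` Hr \<rho> r \<subseteq> Hr \<rho> r" using c1 by blast
    show "Hr \<rho> r \<subseteq> Lop \<rho> N B \<Lambda> ` Hr \<rho> r"
    proof
      fix \<psi> :: "real^'m \<Rightarrow> real^'d" assume "\<psi> \<in> Hr \<rho> r"
      then obtain \<phi> where "\<phi> \<in> Hr \<rho> r" "Lop \<rho> N B \<Lambda> \<phi> = \<psi>"
        using surj[where B=B, OF rho _ inv mu L1 assms(6) mu0] by blast
      then show "\<psi> \<in> Lop \<rho> N B \<Lambda> ` Hr \<rho> r" by blast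
    qed
  qed
  have c2: "bij_betw (Lop \<rho> N B \<Lambda>) (Hr \<rho> r) (Hr \<rho> r)" unfolding bij_betw_def using inj im by blast
  have c3: "\<forall>\<psi>\<in>Hr \<rho> r. Hnorm \<rho> r (inv_into (Hr \<rho> r) (Lop \<rho> N B \<Lambda>) \<psi>)
      \<le> opnorm_inf (matrix_inv (B 0)) / (1 - q) * Hnorm \<rho> r \<psi>"
  proof
    fix \<psi> :: "real^'m \<Rightarrow> real^'d" assume psi: "\<psi> \<in> Hr \<rho> r"
    then have psi': "\<psi> \<in> Lop \<rho> N B \<Lambda> ` Hr \<rho> r" using im by simp
    define \<phi> where "\<phi> = inv_into (Hr \<rho> r) (Lop \<rho> N B \<Lambda>) \<psi>"
    have PH: "\<phi> \<in> Hr \<rho> r" unfolding \<phi>_def by (rule inv_into_into[OF psi'])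
    have Lp: "Lop \<rho> N B \<Lambda> \<phi> = \<psi>" unfolding \<phi>_def by (rule f_inv_into_f[OF psi'])
    have "Hnorm \<rho> r \<phi> \<le> opnorm_inf (matrix_inv (B 0)) * Hnorm \<rho> r \<psi> + q * Hnorm \<rho> r \<phi>"
      using est2[where B=B and N=N, OF rho PH inv mu L1] unfolding Lp q_def .
    then have "(1 - q) * Hnorm \<rho> r \<phi> \<le> opnorm_inf (matrix_inv (B 0)) * Hnorm \<rho> r \<psi>"
      by (simp add: algebra_simps)
    then have "Hnorm \<rho> r \<phi> \<le> opnorm_inf (matrix_inv (B 0)) * Hnorm \<rho> r \<psi> / (1 - q)"
      using q1 by (simp add: field_simps)
    then show "Hnorm \<rho> r (inv_into (Hr \<rho> r) (Lop \<rho> N B \<Lambda>) \<psi>) \<le> opnorm_inf (matrix_inv (B 0)) / (1 - q) * Hnorm \<rho> r \<psi>"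
      unfolding \<phi>_def by simp
  qed
  show ?thesis using c1 c2 c3 by blast
qed


end
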